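(* Let $X\sim N(\theta^*,\sigma^2I_n)$ and let $\widehat{\theta}^{(iso)}=\widehat\theta(\Theta_n^\uparrow)$ be the isotonic least-squares estimator. There exists a universal constant $c>0$ such that for all $n$ and all $k\in[n]$, $$\sup_{\theta^*\in\Theta_{k}^{\uparrow}}\mathbb{E}\|\widehat{\theta}^{(iso)}-\theta^*\|^2\geq c\sigma^2k\log(en/k).$$
   Context: $[n]=\{1,\dots,n\}$. For reals $a\le b$, $(a:b]$ is the set of integers $i$ with $a<i\le b$. For $k\in[n]$, $\Theta_k^{\uparrow}$ is the set of $\theta\in\mathbb{R}^n$ for which there exist integers $0=a_0\le a_1\le\cdots\le a_k=n$ and reals $\mu_1\le\cdots\le\mu_k$ with $\theta_i=\mu_j$ for all $i\in(a_{j-1}:a_j]$. In particular $\Theta_n^\uparrow=\{\theta:\theta_1\le\cdots\le\theta_n\}$, and $\widehat\theta^{(iso)}=\arg\min_{\theta_1\le\cdots\le\theta_n}\|X-\theta\|^2$. *)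

theory Defs
  imports "HOL-Probability.Probability"
begin

text \<open>Vectors in R^n are represented as functions nat => real, extensional on {1..n}.\<close>

definition Theta_up :: "nat \<Rightarrow> nat \<Rightarrow> (nat \<Rightarrow> real) set" where
  "Theta_up n k = {\<theta> \<in> extensional {1..n}.
     \<exists>(a::nat \<Rightarrow> nat) (\<mu>::nat \<Rightarrow> real).
        a 0 = 0 \<and> a k = n \<and> (\<forall>j. 1 \<le> j \<and> j \<le> k \<longrightarrow> a (j - 1) \<le> a j) \<and>
        (\<forall>j. 1 \<le> j \<and> j < k \<longrightarrow> \<mu> j \<le> \<mu> (j + 1)) \<and>
        (\<forall>j i. 1 \<le> j \<and> j \<le> k \<and> a (j - 1) < i \<and> i \<le> a j \<longrightarrow> \<theta> i = \<mu> j)}"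

definition sqdist_n :: "nat \<Rightarrow> (nat \<Rightarrow> real) \<Rightarrow> (nat \<Rightarrow> real) \<Rightarrow> real" where
  "sqdist_n n x y = (\<Sum>i\<in>{1..n}. (x i - y i)\<^sup>2)"

definition iso_est :: "nat \<Rightarrow> (nat \<Rightarrow> real) \<Rightarrow> (nat \<Rightarrow> real)" where
  "iso_est n x = (THE \<theta>. \<theta> \<in> Theta_up n n \<and>
      (\<forall>\<eta>\<in>Theta_up n n. sqdist_n n x \<theta> \<le> sqdist_n n x \<eta>))"

definition gauss_n :: "nat \<Rightarrow> (nat \<Rightarrow> real) \<Rightarrow> real \<Rightarrow> (nat \<Rightarrow> real) measure" where
  "gauss_n n \<theta> \<sigma> = PiM {1..n} (\<lambda>i. density lborel (normal_density (\<theta> i) \<sigma>))"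

end

theory Submission
  imports Defs
begin

definition monoI :: "nat set \<Rightarrow> (nat \<Rightarrow> real) \<Rightarrow> bool" where
  "monoI I \<theta> \<longleftrightarrow> (\<forall>i\<in>I. \<forall>j\<in>I. i \<le> j \<longrightarrow> \<theta> i \<le> \<theta> j)"

definition cst :: "nat set \<Rightarrow> (nat \<Rightarrow> real) \<Rightarrow> (nat \<Rightarrow> real) \<Rightarrow> real" where
  "cst I z \<theta> = (\<Sum>i\<in>I. (z i - \<theta> i)\<^sup>2)"

lemma closed_monoI: "closed {\<theta>::nat\<Rightarrow>real. monoI I \<theta>}"
proof -
  have "{\<theta>::nat\<Rightarrow>real. monoI I \<theta>} = (\<Inter>i\<in>I. \<Inter>j\<in>{j\<in>I. i \<le> j}. {\<theta>. \<theta> i \<le> \<theta> j})"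
    by (auto simp: monoI_def)
  moreover have "closed {\<theta>::nat\<Rightarrow>real. \<theta> i \<le> \<theta> j}" for i j
    by (intro closed_Collect_le continuous_on_product_coordinates)
  ultimately show ?thesis by (simp add: closed_INT)
qed

lemma compact_box: "compact (PiE UNIV (\<lambda>_::nat. {a..b::real}))"
proof -
  have "compactin (product_topology (\<lambda>_. euclidean) UNIV) (PiE UNIV (\<lambda>_::nat. {a..b::real}))"
    by (subst compactin_PiE) auto
  then show ?thesis by (simp add: euclidean_product_topology)
qed

lemma continuous_cst: "continuous_on S (cst I z)"
  unfolding cst_def
  by (intro continuous_intros continuous_on_subset[OF continuous_on_product_coordinates]) auto

lemma cst_clip:
  assumes "\<forall>i\<in>I. a \<le> z i \<and> z i \<le> b"
  shows "cst I z (\<lambda>i. max a (min b (\<eta> i))) \<le> cst I z \<eta>"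
  unfolding cst_def
proof (rule sum_mono)
  fix i assume "i \<in> I"
  with assms have "a \<le> z i" "z i \<le> b" by auto
  then show "(z i - max a (min b (\<eta> i)))\<^sup>2 \<le> (z i - \<eta> i)\<^sup>2"
  proof -
    have "\<bar>z i - max a (min b (\<eta> i))\<bar> \<le> \<bar>z i - \<eta> i\<bar>"
      using \<open>a \<le> z i\<close> \<open>z i \<le> b\<close> by (auto simp: max_def min_def abs_if)
    then show ?thesis by (metis abs_ge_zero power2_abs power_mono)
  qed
qed

lemma clip_mono: "x \<le> y \<Longrightarrow> max a (min b x) \<le> max a (min b (y::real))"
  by (auto simp: max_def min_def)

lemma exist_box:
  assumes "\<forall>i\<in>I. a \<le> z i \<and> z i \<le> b" "a \<le> b"
  shows "\<exists>\<theta>. monoI I \<theta> \<and> (\<forall>i. a \<le> \<theta> i \<and> \<theta> i \<le> b) \<and> (\<forall>\<eta>. monoI I \<eta> \<longrightarrow> cst I z \<theta> \<le> cst I z \<eta>)"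
proof -
  let ?S = "PiE UNIV (\<lambda>_::nat. {a..b::real}) \<inter> {\<theta>. monoI I \<theta>}"
  have "compact ?S" using compact_box closed_monoI by blast
  moreover have "(\<lambda>_. a) \<in> ?S" using assms by (auto simp: monoI_def)
  ultimately obtain \<theta> where th: "\<theta> \<in> ?S" "\<forall>y\<in>?S. cst I z \<theta> \<le> cst I z y"
    using continuous_attains_inf[of ?S "cst I z"] continuous_cst by blast
  have "cst I z \<theta> \<le> cst I z \<eta>" if "monoI I \<eta>" for \<eta>
  proof -
    have "monoI I (\<lambda>i. max a (min b (\<eta> i)))"
      using that unfolding monoI_def using clip_mono by blast
    then have "(\<lambda>i. max a (min b (\<eta> i))) \<in> ?S"
      using assms(2) by (auto simp: PiE_def Pi_def)
    then have "cst I z \<theta> \<le> cst I z (\<lambda>i. max a (min b (\<eta> i)))" using th by blast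
    also have "\<dots> \<le> cst I z \<eta>" by (rule cst_clip[OF assms(1)])
    finally show ?thesis .
  qed
  then show ?thesis using th(1) by (auto simp: PiE_def Pi_def)
qed

lemma cst_expand: "cst I z \<eta> = (\<Sum>i\<in>I. (z i)\<^sup>2) - 2 * (\<Sum>i\<in>I. z i * \<eta> i) + (\<Sum>i\<in>I. (\<eta> i)\<^sup>2)"
  unfolding cst_def by (simp add: power2_diff sum.distrib sum_subtractf sum_distrib_left algebra_simps)

lemma cone_bound:
  assumes fin: "finite I" and th: "monoI I \<theta>" and opt: "\<forall>\<eta>. monoI I \<eta> \<longrightarrow> cst I z \<theta> \<le> cst I z \<eta>"
    and u: "monoI I u"
  shows "2 * (\<Sum>i\<in>I. z i * u i) - (\<Sum>i\<in>I. (u i)\<^sup>2) \<le> (\<Sum>i\<in>I. (\<theta> i)\<^sup>2)"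
proof -
  define A where "A = (\<Sum>i\<in>I. (\<theta> i)\<^sup>2)"
  define B where "B = (\<Sum>i\<in>I. z i * \<theta> i)"
  define Z where "Z = (\<Sum>i\<in>I. (z i)\<^sup>2)"
  have A0: "A \<ge> 0" unfolding A_def by (intro sum_nonneg) auto
  have BA: "B \<le> A"
  proof (rule ccontr)
    assume "\<not> B \<le> A"
    then have BA: "B > A" by simp
    show False
    proof (cases "A = 0")
      case True
      then have "\<forall>i\<in>I. (\<theta> i)\<^sup>2 = 0" unfolding A_def using fin by (subst (asm) sum_nonneg_eq_0_iff) auto
      then have "B = 0" unfolding B_def by simp
      with BA True show False by simp
    next
      case False
      with A0 have Ap: "A > 0" by simp
      define t where "t = B / A"
      have t0: "t > 0" using Ap BA A0 unfolding t_def by (simp add: field_simps)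
      have "monoI I (\<lambda>i. t * \<theta> i)" using th t0 by (auto simp: monoI_def intro: mult_left_mono)
      then have "cst I z \<theta> \<le> cst I z (\<lambda>i. t * \<theta> i)" using opt by blast
      also have "cst I z (\<lambda>i. t * \<theta> i) = Z - 2 * t * B + t\<^sup>2 * A"
        unfolding cst_expand Z_def B_def A_def
        by (simp add: sum_distrib_left power_mult_distrib algebra_simps)
      finally have "Z - 2 * B + A \<le> Z - 2 * t * B + t\<^sup>2 * A"
        unfolding cst_expand Z_def B_def A_def by simp
      then have "Z - 2 * B + A \<le> Z - B * B / A"
        using Ap unfolding t_def by (simp add: power2_eq_square field_simps)
      then have "A * A - 2 * A * B + B * B \<le> 0" using Ap by (simp add: field_simps)
      moreover have "A * A - 2 * A * B + B * B = (A - B)\<^sup>2" by (simp add: power2_eq_square algebra_simps)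
      moreover have "(A - B)\<^sup>2 > 0" using BA by simp
      ultimately show False by linarith
    qed
  qed
  have "cst I z \<theta> \<le> cst I z u" using opt u by blast
  then have "Z - 2 * B + A \<le> Z - 2 * (\<Sum>i\<in>I. z i * u i) + (\<Sum>i\<in>I. (u i)\<^sup>2)"
    unfolding cst_expand Z_def B_def A_def by simp
  then show ?thesis using BA unfolding A_def by linarith
qed

lemma uniq:
  assumes fin: "finite I" and th: "monoI I \<theta>" and opt: "\<forall>\<eta>. monoI I \<eta> \<longrightarrow> cst I z \<theta> \<le> cst I z \<eta>"
    and th2: "monoI I \<theta>'" and opt2: "\<forall>\<eta>. monoI I \<eta> \<longrightarrow> cst I z \<theta>' \<le> cst I z \<eta>"
    and i: "i \<in> I"
  shows "\<theta> i = \<theta>' i"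
proof -
  let ?m = "\<lambda>i. (\<theta> i + \<theta>' i) / 2"
  have "monoI I ?m" using th th2 by (auto simp: monoI_def intro: add_mono divide_right_mono)
  then have m1: "cst I z \<theta> \<le> cst I z ?m" using opt by blast
  have eq: "cst I z \<theta> = cst I z \<theta>'" using opt opt2 th th2 by (meson order_antisym)
  have "cst I z ?m = (cst I z \<theta> + cst I z \<theta>') / 2 - (\<Sum>i\<in>I. (\<theta> i - \<theta>' i)\<^sup>2) / 4"
  proof -
    have "cst I z ?m = (\<Sum>i\<in>I. ((z i - \<theta> i)\<^sup>2 + (z i - \<theta>' i)\<^sup>2) / 2 - (\<theta> i - \<theta>' i)\<^sup>2 / 4)"
      unfolding cst_def by (intro sum.cong) (auto simp: power2_eq_square field_simps)
    also have "\<dots> = (cst I z \<theta> + cst I z \<theta>') / 2 - (\<Sum>i\<in>I. (\<theta> i - \<theta>' i)\<^sup>2) / 4"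
      unfolding cst_def by (simp add: sum_subtractf sum_divide_distrib[symmetric] sum.distrib)
    finally show ?thesis .
  qed
  with m1 eq have "(\<Sum>i\<in>I. (\<theta> i - \<theta>' i)\<^sup>2) \<le> 0" by simp
  then have "\<forall>i\<in>I. (\<theta> i - \<theta>' i)\<^sup>2 = 0"
  proof -
    have "(\<Sum>i\<in>I. (\<theta> i - \<theta>' i)\<^sup>2) = 0"
      using \<open>(\<Sum>i\<in>I. (\<theta> i - \<theta>' i)\<^sup>2) \<le> 0\<close> by (meson antisym sum_nonneg zero_le_power2)
    then show ?thesis using fin by (subst (asm) sum_nonneg_eq_0_iff) auto
  qed
  with i show ?thesis by simp
qed

lemma mu_chain:
  assumes "\<forall>j. 1 \<le> j \<and> j < k \<longrightarrow> (\<mu>::nat\<Rightarrow>real) j \<le> \<mu> (j + 1)"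
  shows "1 \<le> j \<Longrightarrow> j \<le> j' \<Longrightarrow> j' \<le> k \<Longrightarrow> \<mu> j \<le> \<mu> j'"
proof (induction j')
  case 0 then show ?case by simp
next
  case (Suc j')
  show ?case
  proof (cases "j = Suc j'")
    case True then show ?thesis by simp
  next
    case False
    then have "\<mu> j \<le> \<mu> j'" using Suc by simp
    also have "\<mu> j' \<le> \<mu> (Suc j')" using assms Suc False by auto
    finally show ?thesis .
  qed
qed

lemma a_chain:
  assumes "\<forall>j. 1 \<le> j \<and> j \<le> k \<longrightarrow> (a::nat\<Rightarrow>nat) (j - 1) \<le> a j"
  shows "j \<le> j' \<Longrightarrow> j' \<le> k \<Longrightarrow> a j \<le> a j'"
proof (induction j')
  case 0 then show ?case by simp
next
  case (Suc j')
  show ?case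
  proof (cases "j = Suc j'")
    case True then show ?thesis by simp
  next
    case False
    then have "a j \<le> a j'" using Suc by simp
    also have "a j' \<le> a (Suc j')" using assms[rule_format, of "Suc j'"] Suc by auto
    finally show ?thesis .
  qed
qed

lemma Theta_nn: "Theta_up n n = {\<theta> \<in> extensional {1..n}. monoI {1..n} \<theta>}"
proof (intro set_eqI iffI)
  fix \<theta> assume "\<theta> \<in> Theta_up n n"
  then obtain a \<mu> where th: "\<theta> \<in> extensional {1..n}" and a0: "a 0 = 0" and an: "a n = n"
    and am: "\<forall>j. 1 \<le> j \<and> j \<le> n \<longrightarrow> a (j - 1) \<le> a j"
    and mum: "\<forall>j. 1 \<le> j \<and> j < n \<longrightarrow> \<mu> j \<le> \<mu> (j + 1)"
    and eq: "\<forall>j i. 1 \<le> j \<and> j \<le> n \<and> a (j - 1) < i \<and> i \<le> a j \<longrightarrow> \<theta> i = \<mu> j"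
    unfolding Theta_up_def by blast
  have blk: "\<theta> i = \<mu> (LEAST j. i \<le> a j) \<and> 1 \<le> (LEAST j. i \<le> a j) \<and> (LEAST j. i \<le> a j) \<le> n"
    if i: "i \<in> {1..n}" for i
  proof -
    let ?j = "LEAST j. i \<le> a j"
    have ex: "i \<le> a n" using i an by simp
    have jle: "?j \<le> n" using Least_le[of "\<lambda>j. i \<le> a j", OF ex] .
    have ij: "i \<le> a ?j" using LeastI[of "\<lambda>j. i \<le> a j", OF ex] .
    have j1: "1 \<le> ?j" using ij a0 i by (cases "?j") auto
    have "\<not> i \<le> a (?j - 1)" using not_less_Least[of "?j - 1" "\<lambda>j. i \<le> a j"] j1 by simp
    then have "\<theta> i = \<mu> ?j" using eq jle j1 ij by auto
    with j1 jle show ?thesis by simp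
  qed
  have "monoI {1..n} \<theta>"
    unfolding monoI_def
  proof (intro ballI impI)
    fix i i' assume i: "i \<in> {1..n}" and i': "i' \<in> {1..n}" and ii: "i \<le> i'"
    let ?j = "LEAST j. i \<le> a j" and ?j' = "LEAST j. i' \<le> a j"
    have ex: "i' \<le> a ?j'" using LeastI[of "\<lambda>j. i' \<le> a j" n] i' an by simp
    then have "i \<le> a ?j'" using ii by simp
    then have "?j \<le> ?j'" by (rule Least_le)
    then show "\<theta> i \<le> \<theta> i'" using blk[OF i] blk[OF i'] mu_chain[OF mum] by auto
  qed
  with th show "\<theta> \<in> {\<theta> \<in> extensional {1..n}. monoI {1..n} \<theta>}" by simp
next
  fix \<theta> assume "\<theta> \<in> {\<theta> \<in> extensional {1..n}. monoI {1..n} \<theta>}"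
  then have th: "\<theta> \<in> extensional {1..n}" "monoI {1..n} \<theta>" by auto
  show "\<theta> \<in> Theta_up n n"
  proof -
    have ij: "\<And>i j::nat. j - Suc 0 < i \<Longrightarrow> i \<le> j \<Longrightarrow> i = j" by arith
    show ?thesis unfolding Theta_up_def using th ij by (auto simp: monoI_def intro!: exI[of _ "\<lambda>j. j"] exI[of _ \<theta>])
  qed
qed

lemma iso_est_eq:
  assumes q: "q \<in> extensional {1..n}" "monoI {1..n} q"
    and opt: "\<forall>\<eta>. monoI {1..n} \<eta> \<longrightarrow> cst {1..n} x q \<le> cst {1..n} x \<eta>"
  shows "iso_est n x = q"
  unfolding iso_est_def
proof (rule the_equality)
  show "q \<in> Theta_up n n \<and> (\<forall>\<eta>\<in>Theta_up n n. sqdist_n n x q \<le> sqdist_n n x \<eta>)"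
    using q opt by (auto simp: Theta_nn sqdist_n_def cst_def)
next
  fix \<theta> assume h: "\<theta> \<in> Theta_up n n \<and> (\<forall>\<eta>\<in>Theta_up n n. sqdist_n n x \<theta> \<le> sqdist_n n x \<eta>)"
  then have th: "\<theta> \<in> extensional {1..n}" "monoI {1..n} \<theta>" by (auto simp: Theta_nn)
  have opt2: "\<forall>\<eta>. monoI {1..n} \<eta> \<longrightarrow> cst {1..n} x \<theta> \<le> cst {1..n} x \<eta>"
  proof (intro allI impI)
    fix \<eta> assume "monoI {1..n} \<eta>"
    then have "restrict \<eta> {1..n} \<in> Theta_up n n" by (auto simp: Theta_nn monoI_def)
    then have "cst {1..n} x \<theta> \<le> cst {1..n} x (restrict \<eta> {1..n})" using h by (auto simp: sqdist_n_def cst_def)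
    also have "\<dots> = cst {1..n} x \<eta>" unfolding cst_def by (intro sum.cong) auto
    finally show "cst {1..n} x \<theta> \<le> cst {1..n} x \<eta>" .
  qed
  show "\<theta> = q"
  proof (rule extensionalityI[OF th(1) q(1)])
    fix i assume "i \<in> {1..n}"
    then show "\<theta> i = q i" using uniq[OF _ th(2) opt2 q(2) opt] by simp
  qed
qed

lemma decouple:
  fixes I :: "nat set" and \<beta> :: "nat \<Rightarrow> nat" and M :: real
  assumes fin: "finite I"
    and \<beta>m: "\<forall>i\<in>I. \<forall>i'\<in>I. i \<le> i' \<longrightarrow> \<beta> i \<le> \<beta> i'"
    and small: "\<forall>i\<in>I. \<bar>x i - ts i\<bar> < M / 2"
    and ts: "\<forall>i\<in>I. ts i = M * real (\<beta> i)"
  shows "\<exists>q. monoI I q \<and> (\<forall>\<eta>. monoI I \<eta> \<longrightarrow> cst I x q \<le> cst I x \<eta>) \<and>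
     (\<forall>b u. monoI {i\<in>I. \<beta> i = b} u \<longrightarrow>
        2 * (\<Sum>i\<in>{i\<in>I. \<beta> i = b}. (x i - ts i) * u i) - (\<Sum>i\<in>{i\<in>I. \<beta> i = b}. (u i)\<^sup>2)
          \<le> (\<Sum>i\<in>{i\<in>I. \<beta> i = b}. (q i - ts i)\<^sup>2))"
proof (cases "I = {}")
  case True
  then show ?thesis by (auto simp: monoI_def cst_def)
next
  case False
  define w where "w = (\<lambda>i. x i - ts i)"
  define R where "R = Max ((\<lambda>i. \<bar>w i\<bar>) ` I)"
  have R: "\<forall>i\<in>I. -R \<le> w i \<and> w i \<le> R"
  proof
    fix i assume "i \<in> I"
    then have "\<bar>w i\<bar> \<le> R" unfolding R_def using fin by (intro Max_ge) auto
    then show "-R \<le> w i \<and> w i \<le> R" by linarith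
  qed
  have RM: "R < M / 2"
  proof -
    have "R \<in> (\<lambda>i. \<bar>w i\<bar>) ` I" unfolding R_def using fin False by (intro Max_in) auto
    then show ?thesis using small by (auto simp: w_def)
  qed
  have R0: "0 \<le> R" using R False by fastforce
  define B where "B = (\<lambda>b. {i\<in>I. \<beta> i = b})"
  have "\<forall>b. \<exists>p. monoI (B b) p \<and> (\<forall>i. -R \<le> p i \<and> p i \<le> R) \<and>
           (\<forall>\<eta>. monoI (B b) \<eta> \<longrightarrow> cst (B b) w p \<le> cst (B b) w \<eta>)"
    using exist_box[of "B _" "-R" w R] R R0 unfolding B_def by auto
  then obtain p where p: "\<And>b. monoI (B b) (p b)" "\<And>b i. -R \<le> p b i \<and> p b i \<le> R"
    "\<And>b \<eta>. monoI (B b) \<eta> \<Longrightarrow> cst (B b) w (p b) \<le> cst (B b) w \<eta>"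
    by metis
  define q where "q = (\<lambda>i. ts i + p (\<beta> i) i)"
  have finB: "finite (B b)" for b unfolding B_def using fin by auto
  have qm: "monoI I q" unfolding monoI_def
  proof (intro ballI impI)
    fix i i' assume i: "i \<in> I" and i': "i' \<in> I" and ii: "i \<le> i'"
    have bb: "\<beta> i \<le> \<beta> i'" using \<beta>m i i' ii by blast
    show "q i \<le> q i'"
    proof (cases "\<beta> i = \<beta> i'")
      case True
      then have "p (\<beta> i) i \<le> p (\<beta> i) i'" using p(1)[of "\<beta> i"] i i' ii unfolding monoI_def B_def by auto
      then show ?thesis unfolding q_def using ts i i' True by simp
    next
      case False
      then have "real (\<beta> i) + 1 \<le> real (\<beta> i')" using bb by linarith
      then have "M * (real (\<beta> i) + 1) \<le> M * real (\<beta> i')" using RM R0 by (intro mult_left_mono) auto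
      then show ?thesis unfolding q_def using ts i i' p(2)[of "\<beta> i" i] p(2)[of "\<beta> i'" i'] RM
        by (simp add: algebra_simps)
    qed
  qed
  have split: "cst I x \<eta> = (\<Sum>b\<in>\<beta> ` I. cst (B b) w (\<lambda>i. \<eta> i - ts i))" for \<eta>
  proof -
    have "cst I x \<eta> = (\<Sum>b\<in>\<beta> ` I. \<Sum>i\<in>B b. (x i - \<eta> i)\<^sup>2)"
      unfolding cst_def B_def using sum.image_gen[OF fin, of "\<lambda>i. (x i - \<eta> i)\<^sup>2" \<beta>] by simp
    also have "\<dots> = (\<Sum>b\<in>\<beta> ` I. cst (B b) w (\<lambda>i. \<eta> i - ts i))"
      unfolding cst_def w_def by (intro sum.cong) (auto simp: algebra_simps)
    finally show ?thesis .
  qed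
  have qopt: "cst I x q \<le> cst I x \<eta>" if "monoI I \<eta>" for \<eta>
  proof -
    have "cst I x q = (\<Sum>b\<in>\<beta> ` I. cst (B b) w (\<lambda>i. q i - ts i))" by (rule split)
    also have "\<dots> = (\<Sum>b\<in>\<beta> ` I. cst (B b) w (p b))"
      unfolding cst_def B_def q_def by (intro sum.cong refl) auto
    also have "\<dots> \<le> (\<Sum>b\<in>\<beta> ` I. cst (B b) w (\<lambda>i. \<eta> i - ts i))"
    proof (rule sum_mono)
      fix b assume "b \<in> \<beta> ` I"
      have "monoI (B b) (\<lambda>i. \<eta> i - ts i)"
        using that ts unfolding monoI_def B_def by auto
      then show "cst (B b) w (p b) \<le> cst (B b) w (\<lambda>i. \<eta> i - ts i)" by (rule p(3))
    qed
    also have "\<dots> = cst I x \<eta>" by (rule split[symmetric])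
    finally show ?thesis .
  qed
  have blk: "2 * (\<Sum>i\<in>B b. (x i - ts i) * u i) - (\<Sum>i\<in>B b. (u i)\<^sup>2)
          \<le> (\<Sum>i\<in>B b. (q i - ts i)\<^sup>2)" if "monoI (B b) u" for b u
  proof -
    have "2 * (\<Sum>i\<in>B b. w i * u i) - (\<Sum>i\<in>B b. (u i)\<^sup>2) \<le> (\<Sum>i\<in>B b. (p b i)\<^sup>2)"
      using cone_bound[OF finB p(1) _ that] p(3) by blast
    also have "(\<Sum>i\<in>B b. (p b i)\<^sup>2) = (\<Sum>i\<in>B b. (q i - ts i)\<^sup>2)"
      unfolding q_def B_def by (intro sum.cong) auto
    finally show ?thesis unfolding w_def .
  qed
  show ?thesis using qm qopt blk unfolding B_def by blast
qed

abbreviation SN :: "nat set \<Rightarrow> (nat \<Rightarrow> real) measure" where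
  "SN I \<equiv> PiM I (\<lambda>_. density lborel std_normal_density)"

lemma pstd: "prob_space (density lborel std_normal_density)"
  by (rule prob_space_normal_density) simp

interpretation stdP: product_sigma_finite "\<lambda>_::nat. density lborel std_normal_density"
  unfolding product_sigma_finite_def using pstd prob_space_imp_sigma_finite by blast

lemma meas_coord: "i \<in> I \<Longrightarrow> (\<lambda>z. z i) \<in> borel_measurable (SN I)"
proof -
  assume i: "i \<in> I"
  have "measurable (SN I) (density lborel std_normal_density) = measurable (SN I) borel"
    by (rule measurable_cong_sets) auto
  then show ?thesis using measurable_component_singleton[OF i, of "\<lambda>_. density lborel std_normal_density"]
    by simp
qed

lemma std_int1: "integrable (density lborel std_normal_density) (\<lambda>t. t)"
  and std_mom1: "(\<integral>t. t \<partial>density lborel std_normal_density) = 0"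
  and std_int2: "integrable (density lborel std_normal_density) (\<lambda>t. t\<^sup>2)"
  and std_mom2: "(\<integral>t. t\<^sup>2 \<partial>density lborel std_normal_density) = 1"
proof -
  have nn: "AE x in lborel. 0 \<le> std_normal_density x" by (simp add: normal_density_nonneg)
  show "integrable (density lborel std_normal_density) (\<lambda>t. t)"
    using integrable_std_normal_moment[of 1] by (subst integrable_density) (auto simp: nn)
  show "integrable (density lborel std_normal_density) (\<lambda>t. t\<^sup>2)"
    using integrable_std_normal_moment[of 2] by (subst integrable_density) (auto simp: nn)
  show "(\<integral>t. t \<partial>density lborel std_normal_density) = 0"
    using integral_std_normal_moment_odd[of 0] by (subst integral_density) (auto simp: nn)
  show "(\<integral>t. t\<^sup>2 \<partial>density lborel std_normal_density) = 1"
    using integral_std_normal_moment_even[of 1] by (subst integral_density) (auto simp: nn)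
qed

lemma prod_moment:
  assumes fin: "finite I" and i: "i \<in> I" and l: "l \<in> I"
  shows "integrable (SN I) (\<lambda>z. z i * z l)"
    and "(\<integral>z. z i * z l \<partial>SN I) = (if i = l then 1 else 0)"
proof -
  define f where "f = (\<lambda>j (t::real). (if j = i then t else 1) * (if j = l then t else 1))"
  have eq: "z i * z l = (\<Prod>j\<in>I. f j (z j))" for z
  proof -
    have "(\<Prod>j\<in>I. f j (z j)) = (\<Prod>j\<in>I. (if j = i then z j else 1)) * (\<Prod>j\<in>I. (if j = l then z j else 1))"
      unfolding f_def by (rule prod.distrib)
    also have "\<dots> = z i * z l" using fin i l by (simp only: prod.delta if_True)
    finally show ?thesis by simp
  qed
  have fint: "integrable (density lborel std_normal_density) (f j)" for j
  proof -
    have "f j = (\<lambda>t. t\<^sup>2) \<or> f j = (\<lambda>t. t) \<or> f j = (\<lambda>t. 1)"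
      unfolding f_def by (auto simp: power2_eq_square fun_eq_iff)
    then show ?thesis using std_int1 std_int2 finite_measure.integrable_const[OF prob_space.axioms(1)[OF pstd]] by metis
  qed
  show "integrable (SN I) (\<lambda>z. z i * z l)"
    unfolding eq by (intro stdP.product_integrable_prod fin fint)
  have "(\<integral>z. z i * z l \<partial>SN I) = (\<Prod>j\<in>I. integral\<^sup>L (density lborel std_normal_density) (f j))"
    unfolding eq by (intro stdP.product_integral_prod fin fint)
  also have "\<dots> = (if i = l then 1 else 0)"
  proof (cases "i = l")
    case True
    have "integral\<^sup>L (density lborel std_normal_density) (f j) = 1" for j
    proof (cases "j = i")
      case True
      then have "f j = (\<lambda>t. t\<^sup>2)" unfolding f_def using \<open>i = l\<close> by (auto simp: power2_eq_square fun_eq_iff)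
      then show ?thesis using std_mom2 by simp
    next
      case False
      then have "f j = (\<lambda>t. 1)" unfolding f_def using \<open>i = l\<close> by (auto simp: fun_eq_iff)
      then show ?thesis using prob_space.prob_space[OF pstd] by simp
    qed
    then show ?thesis using True by simp
  next
    case False
    have "f i = (\<lambda>t. t)" unfolding f_def using False by (auto simp: fun_eq_iff)
    then have "integral\<^sup>L (density lborel std_normal_density) (f i) = 0" using std_mom1 by simp
    then have "(\<Prod>j\<in>I. integral\<^sup>L (density lborel std_normal_density) (f j)) = 0"
      using fin i by (metis (no_types, lifting) prod_zero)
    then show ?thesis using False by simp
  qed
  finally show "(\<integral>z. z i * z l \<partial>SN I) = (if i = l then 1 else 0)" .
qed

lemma sumsq:
  assumes fin: "finite I" and A: "A \<subseteq> I"
  shows "integrable (SN I) (\<lambda>z. (\<Sum>i\<in>A. z i)\<^sup>2)"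
    and "(\<integral>z. (\<Sum>i\<in>A. z i)\<^sup>2 \<partial>SN I) = real (card A)"
proof -
  have finA: "finite A" using fin A by (rule finite_subset[rotated])
  have eq: "(\<Sum>i\<in>A. z i)\<^sup>2 = (\<Sum>i\<in>A. \<Sum>l\<in>A. z i * z l)" for z :: "nat \<Rightarrow> real"
    by (simp add: power2_eq_square sum_product)
  have intij: "integrable (SN I) (\<lambda>z. z i * z l)" if "i \<in> A" "l \<in> A" for i l
    using prod_moment(1)[OF fin] that A by auto
  have inti: "integrable (SN I) (\<lambda>z. \<Sum>l\<in>A. z i * z l)" if "i \<in> A" for i
    using intij[OF that] by (rule Bochner_Integration.integrable_sum)
  show "integrable (SN I) (\<lambda>z. (\<Sum>i\<in>A. z i)\<^sup>2)"
    unfolding eq using inti by (rule Bochner_Integration.integrable_sum)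
  have "(\<integral>z. (\<Sum>i\<in>A. z i)\<^sup>2 \<partial>SN I) = (\<Sum>i\<in>A. \<Sum>l\<in>A. (\<integral>z. z i * z l \<partial>SN I))"
    unfolding eq using A
    by (subst Bochner_Integration.integral_sum, (use inti in auto), intro sum.cong refl, subst Bochner_Integration.integral_sum, (use intij in auto))
  also have "\<dots> = (\<Sum>i\<in>A. \<Sum>l\<in>A. (if i = l then 1 else 0))"
    using A by (intro sum.cong refl prod_moment(2)[OF fin]) auto
  also have "\<dots> = real (card A)" using finA by simp
  finally show "(\<integral>z. (\<Sum>i\<in>A. z i)\<^sup>2 \<partial>SN I) = real (card A)" .
qed

lemma distr_neg1: "distr (density lborel std_normal_density) (density lborel std_normal_density) uminus
   = density lborel std_normal_density"
proof -
  let ?M = "density lborel std_normal_density"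
  interpret p: prob_space ?M by (rule pstd)
  have d: "distributed ?M lborel (\<lambda>x. x) std_normal_density"
    unfolding distributed_def by (auto simp: distr_id2)
  have "distributed ?M lborel (\<lambda>x. 0 + (-1) * x) (normal_density (0 + (-1) * 0) (\<bar>-1\<bar> * 1))"
    by (rule p.normal_density_affine[OF d]) auto
  then have "distr ?M lborel (\<lambda>x. - x) = ?M" by (simp add: distributed_def)
  moreover have "distr ?M ?M uminus = distr ?M lborel (\<lambda>x. - x)"
    by (intro distr_cong) auto
  ultimately show ?thesis by simp
qed

lemma distr_neg:
  assumes fin: "finite I"
  shows "distr (SN I) (SN I) (compose I uminus) = SN I"
proof -
  have "distr (SN I) (SN I) (compose I uminus) =
     PiM I (\<lambda>i. distr (density lborel std_normal_density) (density lborel std_normal_density) uminus)"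
    by (rule distr_PiM_finite_prob_space'[OF fin pstd pstd]) auto
  then show ?thesis by (simp add: distr_neg1)
qed

lemma negsq:
  assumes fin: "finite I" and A: "A \<subseteq> I"
  shows "integrable (SN I) (\<lambda>z. (max 0 (- (\<Sum>i\<in>A. z i)))\<^sup>2)"
    and "(\<integral>z. (max 0 (- (\<Sum>i\<in>A. z i)))\<^sup>2 \<partial>SN I) = real (card A) / 2"
proof -
  have finA: "finite A" using fin A by (rule finite_subset[rotated])
  have ms: "(\<lambda>z. (\<Sum>i\<in>A. z i)) \<in> borel_measurable (SN I)"
    using A by (intro borel_measurable_sum meas_coord) auto
  have mT: "compose I uminus \<in> measurable (SN I) (SN I)"
    unfolding compose_def
    by (intro measurable_restrict) (auto intro!: measurable_compose[OF measurable_component_singleton])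
  have bnd: "(max 0 (-s))\<^sup>2 \<le> s\<^sup>2" "(max 0 s)\<^sup>2 \<le> s\<^sup>2" for s :: real
    by (auto simp: max_def)
  show int1: "integrable (SN I) (\<lambda>z. (max 0 (- (\<Sum>i\<in>A. z i)))\<^sup>2)"
    by (rule Bochner_Integration.integrable_bound[OF sumsq(1)[OF fin A]])
       (use ms in \<open>auto intro!: bnd\<close>)
  have int2: "integrable (SN I) (\<lambda>z. (max 0 (\<Sum>i\<in>A. z i))\<^sup>2)"
    by (rule Bochner_Integration.integrable_bound[OF sumsq(1)[OF fin A]])
       (use ms in \<open>auto intro!: bnd\<close>)
  have sym: "(\<integral>z. (max 0 (\<Sum>i\<in>A. z i))\<^sup>2 \<partial>SN I) = (\<integral>z. (max 0 (- (\<Sum>i\<in>A. z i)))\<^sup>2 \<partial>SN I)"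
  proof -
    have "(\<integral>z. (max 0 (- (\<Sum>i\<in>A. z i)))\<^sup>2 \<partial>SN I) =
          (\<integral>z. (max 0 (- (\<Sum>i\<in>A. z i)))\<^sup>2 \<partial>distr (SN I) (SN I) (compose I uminus))"
      by (simp add: distr_neg[OF fin])
    also have "\<dots> = (\<integral>z. (max 0 (- (\<Sum>i\<in>A. compose I uminus z i)))\<^sup>2 \<partial>SN I)"
      by (rule integral_distr[OF mT]) (use ms in auto)
    also have "\<dots> = (\<integral>z. (max 0 (\<Sum>i\<in>A. z i))\<^sup>2 \<partial>SN I)"
    proof (intro Bochner_Integration.integral_cong refl)
      fix z :: "nat \<Rightarrow> real"
      have "(\<Sum>i\<in>A. compose I uminus z i) = (\<Sum>i\<in>A. - z i)"
        using A by (intro sum.cong) (auto simp: compose_def)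
      then show "(max 0 (- (\<Sum>i\<in>A. compose I uminus z i)))\<^sup>2 = (max 0 (\<Sum>i\<in>A. z i))\<^sup>2"
        by (simp add: sum_negf)
    qed
    finally show ?thesis by simp
  qed
  have split: "(\<Sum>i\<in>A. z i)\<^sup>2 = (max 0 (\<Sum>i\<in>A. z i))\<^sup>2 + (max 0 (- (\<Sum>i\<in>A. z i)))\<^sup>2" for z :: "nat \<Rightarrow> real"
    by (auto simp: max_def power2_eq_square)
  have "real (card A) = (\<integral>z. (max 0 (\<Sum>i\<in>A. z i))\<^sup>2 + (max 0 (- (\<Sum>i\<in>A. z i)))\<^sup>2 \<partial>SN I)"
    using sumsq(2)[OF fin A] by (simp only: split)
  also have "\<dots> = 2 * (\<integral>z. (max 0 (- (\<Sum>i\<in>A. z i)))\<^sup>2 \<partial>SN I)"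
    using int1 int2 sym by simp
  finally show "(\<integral>z. (max 0 (- (\<Sum>i\<in>A. z i)))\<^sup>2 \<partial>SN I) = real (card A) / 2" by simp
qed

lemma distr_PiM_fin_dep:
  assumes fin: "finite I"
  assumes "product_prob_space M"
  assumes "product_prob_space M'"
  assumes [measurable]: "\<And>i. i \<in> I \<Longrightarrow> f i \<in> measurable (M i) (M' i)"
  shows   "distr (PiM I M) (PiM I M') (\<lambda>x. \<lambda>i\<in>I. f i (x i)) = PiM I (\<lambda>i. distr (M i) (M' i) (f i))"
proof -
  interpret M: product_prob_space M by fact
  interpret M': product_prob_space M' by fact
  define N where "N = (\<lambda>i. if i \<in> I then distr (M i) (M' i) (f i) else M' i)"
  have [intro]: "prob_space (N i)" for i
    by (auto simp: N_def intro!: M.M.prob_space_distr M'.prob_space)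
  interpret N: product_prob_space N
    by (intro product_prob_spaceI) (auto simp: N_def M'.prob_space intro: M.M.prob_space_distr)
  have mf: "(\<lambda>x. \<lambda>i\<in>I. f i (x i)) \<in> Pi\<^sub>M I M \<rightarrow>\<^sub>M Pi\<^sub>M I M'"
    by (intro measurable_restrict) (auto intro!: measurable_compose[OF measurable_component_singleton])
  have "distr (PiM I M) (PiM I M') (\<lambda>x. \<lambda>i\<in>I. f i (x i)) = PiM I N"
  proof (rule N.PiM_eqI)
    have N_events_eq: "sets (Pi\<^sub>M I N) = sets (Pi\<^sub>M I M')"
      unfolding N_def by (intro sets_PiM_cong) auto
    also have "\<dots> = sets (distr (Pi\<^sub>M I M) (Pi\<^sub>M I M') (\<lambda>x. \<lambda>i\<in>I. f i (x i)))"
      by simp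
    finally show "sets (distr (Pi\<^sub>M I M) (Pi\<^sub>M I M') (\<lambda>x. \<lambda>i\<in>I. f i (x i))) = sets (Pi\<^sub>M I N)"  ..
    fix A assume A: "\<And>i. i \<in> I \<Longrightarrow> A i \<in> N.M.events i"
    have "emeasure (distr (Pi\<^sub>M I M) (Pi\<^sub>M I M') (\<lambda>x. \<lambda>i\<in>I. f i (x i))) (Pi\<^sub>E I A) =
          emeasure (Pi\<^sub>M I M) ((\<lambda>x. \<lambda>i\<in>I. f i (x i)) -` Pi\<^sub>E I A \<inter> space (Pi\<^sub>M I M))"
    proof (intro emeasure_distr)
      show "(\<lambda>x. \<lambda>i\<in>I. f i (x i)) \<in> Pi\<^sub>M I M \<rightarrow>\<^sub>M Pi\<^sub>M I M'" by (rule mf)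
      show "Pi\<^sub>E I A \<in> sets (Pi\<^sub>M I M')"
        unfolding N_events_eq [symmetric] by (intro sets_PiM_I_finite fin A)
    qed
    also have "(\<lambda>x. \<lambda>i\<in>I. f i (x i)) -` Pi\<^sub>E I A \<inter> space (Pi\<^sub>M I M) = Pi\<^sub>E I (\<lambda>i. f i -` A i \<inter> space (M i))"
      using A by (auto simp: space_PiM PiE_def Pi_def extensional_def N_def)
    also have "emeasure (Pi\<^sub>M I M) (Pi\<^sub>E I (\<lambda>i. f i -` A i \<inter> space (M i))) =
          (\<Prod>i\<in>I. emeasure (M i) (f i -` A i \<inter> space (M i)))"
      using A by (intro M.emeasure_PiM fin) (auto simp: N_def)
    also have "\<dots> = (\<Prod>i\<in>I. emeasure (distr (M i) (M' i) (f i)) (A i))"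
      using A by (intro prod.cong emeasure_distr [symmetric]) (auto simp: N_def)
    also have "\<dots> = (\<Prod>i\<in>I. emeasure (N i) (A i))"
      unfolding N_def by (intro prod.cong) (auto simp: N_def)
    finally show "emeasure (distr (Pi\<^sub>M I M) (Pi\<^sub>M I M') (\<lambda>x. \<lambda>i\<in>I. f i (x i))) (Pi\<^sub>E I A) = \<dots>" .
  qed (rule fin)
  also have "PiM I N = PiM I (\<lambda>i. distr (M i) (M' i) (f i))"
    by (intro PiM_cong) (auto simp: N_def)
  finally show ?thesis .
qed

lemma distr_affine1:
  assumes s: "\<sigma> > 0"
  shows "distr (density lborel std_normal_density) (density lborel (normal_density \<mu> \<sigma>)) (\<lambda>t. \<mu> + \<sigma> * t)
   = density lborel (normal_density \<mu> \<sigma>)"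
proof -
  let ?M = "density lborel std_normal_density"
  interpret p: prob_space ?M by (rule pstd)
  have d: "distributed ?M lborel (\<lambda>x. x) std_normal_density"
    unfolding distributed_def by (auto simp: distr_id2)
  have "distributed ?M lborel (\<lambda>x. \<mu> + \<sigma> * x) (normal_density (\<mu> + \<sigma> * 0) (\<bar>\<sigma>\<bar> * 1))"
    by (rule p.normal_density_affine[OF d]) (use s in auto)
  then have "distr ?M lborel (\<lambda>x. \<mu> + \<sigma> * x) = density lborel (normal_density \<mu> \<sigma>)"
    using s by (simp add: distributed_def)
  moreover have "distr ?M (density lborel (normal_density \<mu> \<sigma>)) (\<lambda>x. \<mu> + \<sigma> * x) = distr ?M lborel (\<lambda>x. \<mu> + \<sigma> * x)"
    by (intro distr_cong) auto
  ultimately show ?thesis by simp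
qed

lemma gauss_transl:
  assumes s: "\<sigma> > 0"
  shows "gauss_n n \<theta> \<sigma> = distr (SN {1..n}) (gauss_n n \<theta> \<sigma>) (\<lambda>z. \<lambda>i\<in>{1..n}. \<theta> i + \<sigma> * z i)"
proof -
  have pp: "product_prob_space (\<lambda>i. density lborel (normal_density (\<theta> i) \<sigma>))"
    by (intro product_prob_spaceI prob_space_normal_density s)
  have pp0: "product_prob_space (\<lambda>_::nat. density lborel std_normal_density)"
    by (intro product_prob_spaceI pstd)
  have "distr (SN {1..n}) (gauss_n n \<theta> \<sigma>) (\<lambda>z. \<lambda>i\<in>{1..n}. \<theta> i + \<sigma> * z i)
     = PiM {1..n} (\<lambda>i. distr (density lborel std_normal_density) (density lborel (normal_density (\<theta> i) \<sigma>)) (\<lambda>t. \<theta> i + \<sigma> * t))"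
    unfolding gauss_n_def by (rule distr_PiM_fin_dep[OF _ pp0 pp]) auto
  also have "\<dots> = gauss_n n \<theta> \<sigma>"
    unfolding gauss_n_def using s by (simp add: distr_affine1)
  finally show ?thesis by simp
qed

lemma real_step:
  fixes s a x :: real
  assumes s: "s > 0"
  shows "2 * max a x * (s * x) - s * (max a x)\<^sup>2 \<ge> s * x\<^sup>2 - 3/2 * s * (max 0 (-x))\<^sup>2 - 3 * s * (max 0 a)\<^sup>2"
proof -
  have key: "2 * max a x * x - (max a x)\<^sup>2 \<ge> x\<^sup>2 - 3/2 * (max 0 (-x))\<^sup>2 - 3 * (max 0 a)\<^sup>2"
  proof (cases "a \<le> x")
    case True
    then have "max a x = x" by simp
    then have e: "2 * max a x * x - (max a x)\<^sup>2 = x\<^sup>2" by (simp add: power2_eq_square)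
    have n1: "0 \<le> (max 0 (-x))\<^sup>2" and n2: "0 \<le> (max 0 a)\<^sup>2" by simp_all
    from e n1 n2 show ?thesis by linarith
  next
    case False
    define p where "p = max 0 a"
    define q where "q = max 0 (-x)"
    have pq: "0 \<le> p" "0 \<le> q" "0 \<le> a - x" "a - x \<le> p + q" unfolding p_def q_def using False by auto
    have "(a - x)\<^sup>2 \<le> (p + q)\<^sup>2" using pq by (intro power_mono) auto
    also have "\<dots> \<le> 3 * p\<^sup>2 + 3/2 * q\<^sup>2"
    proof -
      have "0 \<le> 2 * (p - q/2)\<^sup>2" by simp
      then show ?thesis by (simp add: power2_eq_square algebra_simps)
    qed
    finally have "(a - x)\<^sup>2 \<le> 3 * p\<^sup>2 + 3/2 * q\<^sup>2" .
    moreover have "max a x = a" using False by simp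
    ultimately show ?thesis unfolding p_def q_def by (simp add: power2_eq_square algebra_simps)
  qed
  have "s * (x\<^sup>2 - 3/2 * (max 0 (-x))\<^sup>2 - 3 * (max 0 a)\<^sup>2) \<le> s * (2 * max a x * x - (max a x)\<^sup>2)"
    using key s by (intro mult_left_mono) auto
  then show ?thesis by (simp add: algebra_simps)
qed

definition Sb :: "(nat \<Rightarrow> nat set) \<Rightarrow> (nat \<Rightarrow> real) \<Rightarrow> nat \<Rightarrow> real" where
  "Sb P w j = (\<Sum>i\<in>P j. w i)"

definition sz :: "(nat \<Rightarrow> nat set) \<Rightarrow> nat \<Rightarrow> real" where
  "sz P j = real (card (P j))"

definition LBb :: "(nat \<Rightarrow> nat set) \<Rightarrow> nat \<Rightarrow> (nat \<Rightarrow> real) \<Rightarrow> real" where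
  "LBb P L w = (\<Sum>j\<in>{1..L}. (Sb P w j)\<^sup>2 / sz P j) -
     (\<Sum>j\<in>{2..L}. 3/2 * (max 0 (- Sb P w j))\<^sup>2 / sz P j +
         3 * (\<Sum>l\<in>{1..j-1}. sz P j * (Sb P w l / sz P l)\<^sup>2))"

lemma block_lb:
  fixes P :: "nat \<Rightarrow> nat set" and L :: nat and w :: "nat \<Rightarrow> real"
  assumes L: "L \<ge> 1"
    and fin: "\<forall>j\<in>{1..L}. finite (P j) \<and> P j \<noteq> {}"
    and ord: "\<forall>j\<in>{1..L}. \<forall>j'\<in>{1..L}. j < j' \<longrightarrow> (\<forall>i\<in>P j. \<forall>i'\<in>P j'. i < i')"
  shows "\<exists>u. monoI (\<Union>j\<in>{1..L}. P j) u \<and>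
     LBb P L w \<le> 2 * (\<Sum>i\<in>(\<Union>j\<in>{1..L}. P j). w i * u i) - (\<Sum>i\<in>(\<Union>j\<in>{1..L}. P j). (u i)\<^sup>2)"
proof -
  have ordE: "\<And>j j' i i'. j\<in>{1..L} \<Longrightarrow> j'\<in>{1..L} \<Longrightarrow> j < j' \<Longrightarrow> i \<in> P j \<Longrightarrow> i' \<in> P j' \<Longrightarrow> i < i'"
    using ord by blast
  define x where "x = (\<lambda>j. Sb P w j / sz P j)"
  define c where "c = (\<lambda>j. Max (x ` {1..j}))"
  define u where "u = (\<lambda>i. \<Sum>j\<in>{1..L}. if i \<in> P j then c j else 0)"
  have disj: "P j \<inter> P j' = {}" if "j \<in> {1..L}" "j' \<in> {1..L}" "j \<noteq> j'" for j j'
  proof -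
    { fix i assume "i \<in> P j" "i \<in> P j'"
      then have False
      proof (cases "j < j'")
        case True
        have "i < i" by (rule ordE[of j j' i i]) (use that \<open>j < j'\<close> \<open>i \<in> P j\<close> \<open>i \<in> P j'\<close> in auto)
        then show False by simp
      next
        case False
        then have "j' < j" using that by simp
        have "i < i" by (rule ordE[of j' j i i]) (use that \<open>j' < j\<close> \<open>i \<in> P j\<close> \<open>i \<in> P j'\<close> in auto)
        then show False by simp
      qed }
    then show ?thesis by blast
  qed
  have uval: "u i = c j" if j: "j \<in> {1..L}" and i: "i \<in> P j" for i j
  proof -
    have "u i = (\<Sum>j'\<in>{1..L}. if j' = j then c j' else 0)"
      unfolding u_def using disj[OF j] i j by (intro sum.cong refl) auto
    also have "\<dots> = c j" using j by simp
    finally show ?thesis .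
  qed
  have szp: "sz P j > 0" if "j \<in> {1..L}" for j
    using fin that unfolding sz_def by (auto simp: card_gt_0_iff)
  have cmono: "c j \<le> c j'" if "1 \<le> j" "j \<le> j'" for j j'
    unfolding c_def using that by (intro Max_mono) auto
  have mono: "monoI (\<Union>j\<in>{1..L}. P j) u"
    unfolding monoI_def
  proof (intro ballI impI)
    fix i i' assume i: "i \<in> (\<Union>j\<in>{1..L}. P j)" and i': "i' \<in> (\<Union>j\<in>{1..L}. P j)" and ii: "i \<le> i'"
    obtain j where j: "j \<in> {1..L}" "i \<in> P j" using i by blast
    obtain j' where j': "j' \<in> {1..L}" "i' \<in> P j'" using i' by blast
    have "j \<le> j'"
    proof (rule ccontr)
      assume "\<not> j \<le> j'"
      then have "i' < i" using ordE[of j' j i' i] j j' by simp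
      with ii show False by simp
    qed
    then show "u i \<le> u i'" using uval[OF j] uval[OF j'] cmono j by auto
  qed
  define T where "T = (\<lambda>j. 2 * c j * Sb P w j - sz P j * (c j)\<^sup>2)"
  have "2 * (\<Sum>i\<in>(\<Union>j\<in>{1..L}. P j). w i * u i) - (\<Sum>i\<in>(\<Union>j\<in>{1..L}. P j). (u i)\<^sup>2)
     = (\<Sum>i\<in>(\<Union>j\<in>{1..L}. P j). 2 * w i * u i - (u i)\<^sup>2)"
    by (simp add: sum_subtractf sum_distrib_left mult.assoc)
  also have "\<dots> = (\<Sum>j\<in>{1..L}. \<Sum>i\<in>P j. 2 * w i * u i - (u i)\<^sup>2)"
    using fin disj by (intro sum.UNION_disjoint) auto
  also have "\<dots> = (\<Sum>j\<in>{1..L}. T j)"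
  proof (intro sum.cong refl)
    fix j assume j: "j \<in> {1..L}"
    have "(\<Sum>i\<in>P j. 2 * w i * u i - (u i)\<^sup>2) = (\<Sum>i\<in>P j. 2 * c j * w i - (c j)\<^sup>2)"
      using uval[OF j] by (intro sum.cong) auto
    also have "\<dots> = T j" unfolding T_def Sb_def sz_def
      by (simp add: sum_subtractf sum_distrib_left)
    finally show "(\<Sum>i\<in>P j. 2 * w i * u i - (u i)\<^sup>2) = T j" .
  qed
  finally have eqT: "2 * (\<Sum>i\<in>(\<Union>j\<in>{1..L}. P j). w i * u i) - (\<Sum>i\<in>(\<Union>j\<in>{1..L}. P j). (u i)\<^sup>2)
     = (\<Sum>j\<in>{1..L}. T j)" .
  have T1: "T 1 = (Sb P w 1)\<^sup>2 / sz P 1"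
  proof -
    have "c 1 = x 1" unfolding c_def by simp
    moreover have "sz P 1 > 0" using szp L by simp
    ultimately show ?thesis unfolding T_def x_def by (simp add: power2_eq_square field_simps)
  qed
  have Tj: "T j \<ge> (Sb P w j)\<^sup>2 / sz P j - (3/2 * (max 0 (- Sb P w j))\<^sup>2 / sz P j +
         3 * (\<Sum>l\<in>{1..j-1}. sz P j * (Sb P w l / sz P l)\<^sup>2))" if j: "j \<in> {2..L}" for j
  proof -
    have s: "sz P j > 0" using szp j by simp
    define a where "a = c (j - 1)"
    have cj: "c j = max a (x j)"
    proof -
      have "{1..j} = insert j {1..j-1}" using j by auto
      then have "x ` {1..j} = insert (x j) (x ` {1..j-1})" by auto
      moreover have "x ` {1..j-1} \<noteq> {}" using j by auto
      ultimately show ?thesis unfolding c_def a_def by (simp add: max.commute)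
    qed
    have Sx: "Sb P w j = sz P j * x j" unfolding x_def using s by simp
    have step: "T j \<ge> sz P j * (x j)\<^sup>2 - 3/2 * sz P j * (max 0 (- x j))\<^sup>2 - 3 * sz P j * (max 0 a)\<^sup>2"
      unfolding T_def cj Sx using real_step[OF s, where a=a and x="x j"] by (simp add: algebra_simps)
    have e1: "sz P j * (x j)\<^sup>2 = (Sb P w j)\<^sup>2 / sz P j"
      unfolding x_def using s by (simp add: power2_eq_square field_simps)
    have e2: "sz P j * (max 0 (- x j))\<^sup>2 = (max 0 (- Sb P w j))\<^sup>2 / sz P j"
    proof -
      have h: "max 0 (- Sb P w j) = sz P j * max 0 (- x j)"
        unfolding x_def using s by (auto simp: max_def field_simps)
      show ?thesis unfolding h using s by (simp add: power2_eq_square)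
    qed
    have aeq: "a \<in> x ` {1..j-1}" unfolding a_def c_def using j by (intro Max_in) auto
    then obtain l0 where l0: "l0 \<in> {1..j-1}" "a = x l0" by blast
    have "(max 0 a)\<^sup>2 \<le> (x l0)\<^sup>2" using l0 by (auto simp: max_def)
    also have "\<dots> \<le> (\<Sum>l\<in>{1..j-1}. (x l)\<^sup>2)"
      using l0 by (intro member_le_sum) auto
    finally have "sz P j * (max 0 a)\<^sup>2 \<le> sz P j * (\<Sum>l\<in>{1..j-1}. (x l)\<^sup>2)"
      using s by (intro mult_left_mono) auto
    also have "\<dots> = (\<Sum>l\<in>{1..j-1}. sz P j * (Sb P w l / sz P l)\<^sup>2)"
      unfolding x_def by (simp add: sum_distrib_left)
    finally have e3: "sz P j * (max 0 a)\<^sup>2 \<le> (\<Sum>l\<in>{1..j-1}. sz P j * (Sb P w l / sz P l)\<^sup>2)" .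
    show ?thesis using step e1 e2 e3 by (simp add: algebra_simps) 
  qed
  have "LBb P L w \<le> (\<Sum>j\<in>{1..L}. T j)"
  proof -
    have split: "{1..L} = insert 1 {2..L}" using L by auto
    have "(\<Sum>j\<in>{2..L}. (Sb P w j)\<^sup>2 / sz P j) - (\<Sum>j\<in>{2..L}. 3/2 * (max 0 (- Sb P w j))\<^sup>2 / sz P j +
         3 * (\<Sum>l\<in>{1..j-1}. sz P j * (Sb P w l / sz P l)\<^sup>2)) \<le> (\<Sum>j\<in>{2..L}. T j)"
      unfolding sum_subtractf[symmetric] by (intro sum_mono Tj) 
    then show ?thesis unfolding LBb_def split using T1 by (simp add: sum.insert)
  qed
  then show ?thesis using mono eqT by auto
qed

lemma LBb_canon: "LBb P L z = (\<Sum>j\<in>{1..L}. (Sb P z j)\<^sup>2 * (1 / sz P j)) -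
   (\<Sum>j\<in>{2..L}. (max 0 (- Sb P z j))\<^sup>2 * (3/2 / sz P j) +
      (\<Sum>l\<in>{1..j-1}. (Sb P z l)\<^sup>2 * (3 * sz P j / (sz P l)\<^sup>2)))"
  unfolding LBb_def
  by (simp add: sum_distrib_left power_divide algebra_simps)

lemma LBb_int:
  assumes fin: "finite I" and P: "\<forall>j\<in>{1..L}. P j \<subseteq> I"
  shows "integrable (SN I) (LBb P L)"
    and "(\<integral>z. LBb P L z \<partial>SN I) = (\<Sum>j\<in>{1..L}. sz P j * (1 / sz P j)) -
   (\<Sum>j\<in>{2..L}. sz P j / 2 * (3/2 / sz P j) +
      (\<Sum>l\<in>{1..j-1}. sz P l * (3 * sz P j / (sz P l)\<^sup>2)))"
proof -
  have iS: "integrable (SN I) (\<lambda>z. (Sb P z j)\<^sup>2)" "(\<integral>z. (Sb P z j)\<^sup>2 \<partial>SN I) = sz P j"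
    if "j \<in> {1..L}" for j
    using sumsq[OF fin, of "P j"] P that unfolding Sb_def sz_def by auto
  have iN: "integrable (SN I) (\<lambda>z. (max 0 (- Sb P z j))\<^sup>2)" "(\<integral>z. (max 0 (- Sb P z j))\<^sup>2 \<partial>SN I) = sz P j / 2"
    if "j \<in> {1..L}" for j
    using negsq[OF fin, of "P j"] P that unfolding Sb_def sz_def by auto
  have a1: "integrable (SN I) (\<lambda>z. (Sb P z j)\<^sup>2 * c)" if "j \<in> {1..L}" for j c
    using iS(1)[OF that] by (rule integrable_mult_left)
  have a2: "integrable (SN I) (\<lambda>z. (max 0 (- Sb P z j))\<^sup>2 * c)" if "j \<in> {1..L}" for j c
    using iN(1)[OF that] by (rule integrable_mult_left)
  have a3: "integrable (SN I) (\<lambda>z. \<Sum>l\<in>{1..j-1}. (Sb P z l)\<^sup>2 * (3 * sz P j / (sz P l)\<^sup>2))" if "j \<in> {2..L}" for j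
    using that by (intro Bochner_Integration.integrable_sum a1) auto
  have A: "integrable (SN I) (\<lambda>z. \<Sum>j\<in>{1..L}. (Sb P z j)\<^sup>2 * (1 / sz P j))"
    by (intro Bochner_Integration.integrable_sum a1)
  have B: "integrable (SN I) (\<lambda>z. \<Sum>j\<in>{2..L}. (max 0 (- Sb P z j))\<^sup>2 * (3/2 / sz P j) +
      (\<Sum>l\<in>{1..j-1}. (Sb P z l)\<^sup>2 * (3 * sz P j / (sz P l)\<^sup>2)))"
    by (intro Bochner_Integration.integrable_sum Bochner_Integration.integrable_add a2 a3) auto
  show "integrable (SN I) (LBb P L)"
    unfolding LBb_canon[abs_def] using A B by (rule Bochner_Integration.integrable_diff)
  have "(\<integral>z. LBb P L z \<partial>SN I) = (\<integral>z. (\<Sum>j\<in>{1..L}. (Sb P z j)\<^sup>2 * (1 / sz P j)) \<partial>SN I) -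
     (\<integral>z. (\<Sum>j\<in>{2..L}. (max 0 (- Sb P z j))\<^sup>2 * (3/2 / sz P j) +
      (\<Sum>l\<in>{1..j-1}. (Sb P z l)\<^sup>2 * (3 * sz P j / (sz P l)\<^sup>2))) \<partial>SN I)"
    unfolding LBb_canon by (rule Bochner_Integration.integral_diff[OF A B])
  also have "(\<integral>z. (\<Sum>j\<in>{1..L}. (Sb P z j)\<^sup>2 * (1 / sz P j)) \<partial>SN I) = (\<Sum>j\<in>{1..L}. sz P j * (1 / sz P j))"
    by (subst Bochner_Integration.integral_sum, (rule a1, assumption)) (auto intro!: sum.cong simp: iS(2))
  also have "(\<integral>z. (\<Sum>j\<in>{2..L}. (max 0 (- Sb P z j))\<^sup>2 * (3/2 / sz P j) +
      (\<Sum>l\<in>{1..j-1}. (Sb P z l)\<^sup>2 * (3 * sz P j / (sz P l)\<^sup>2))) \<partial>SN I) =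
      (\<Sum>j\<in>{2..L}. sz P j / 2 * (3/2 / sz P j) +
      (\<Sum>l\<in>{1..j-1}. sz P l * (3 * sz P j / (sz P l)\<^sup>2)))"
  proof (subst Bochner_Integration.integral_sum, goal_cases)
    case (1 j)
    then show ?case by (intro Bochner_Integration.integrable_add a2 a3) auto
  next
    case 2
    show ?case
    proof (intro sum.cong refl)
      fix j assume j: "j \<in> {2..L}"
      have "(\<integral>z. (max 0 (- Sb P z j))\<^sup>2 * (3/2 / sz P j) +
        (\<Sum>l\<in>{1..j-1}. (Sb P z l)\<^sup>2 * (3 * sz P j / (sz P l)\<^sup>2)) \<partial>SN I) =
        (\<integral>z. (max 0 (- Sb P z j))\<^sup>2 * (3/2 / sz P j) \<partial>SN I) +
        (\<integral>z. (\<Sum>l\<in>{1..j-1}. (Sb P z l)\<^sup>2 * (3 * sz P j / (sz P l)\<^sup>2)) \<partial>SN I)"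
        using j by (intro Bochner_Integration.integral_add a2 a3) auto
      also have "(\<integral>z. (max 0 (- Sb P z j))\<^sup>2 * (3/2 / sz P j) \<partial>SN I) = sz P j / 2 * (3/2 / sz P j)"
      proof -
        have jj: "j \<in> {1..L}" using j by auto
        show ?thesis by (simp only: integral_mult_left_zero iN(2)[OF jj])
      qed
      also have "(\<integral>z. (\<Sum>l\<in>{1..j-1}. (Sb P z l)\<^sup>2 * (3 * sz P j / (sz P l)\<^sup>2)) \<partial>SN I) =
           (\<Sum>l\<in>{1..j-1}. sz P l * (3 * sz P j / (sz P l)\<^sup>2))"
      proof -
        have ll: "l \<in> {1..L}" if "l \<in> {1..j-1}" for l using that j by auto
        have "(\<integral>z. (\<Sum>l\<in>{1..j-1}. (Sb P z l)\<^sup>2 * (3 * sz P j / (sz P l)\<^sup>2)) \<partial>SN I) =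
           (\<Sum>l\<in>{1..j-1}. (\<integral>z. (Sb P z l)\<^sup>2 * (3 * sz P j / (sz P l)\<^sup>2) \<partial>SN I))"
          by (rule Bochner_Integration.integral_sum) (rule a1[OF ll])
        also have "\<dots> = (\<Sum>l\<in>{1..j-1}. sz P l * (3 * sz P j / (sz P l)\<^sup>2))"
          by (intro sum.cong refl) (simp only: integral_mult_left_zero iS(2)[OF ll])
        finally show ?thesis .
      qed
      finally show "(\<integral>z. (max 0 (- Sb P z j))\<^sup>2 * (3/2 / sz P j) +
        (\<Sum>l\<in>{1..j-1}. (Sb P z l)\<^sup>2 * (3 * sz P j / (sz P l)\<^sup>2)) \<partial>SN I) =
        sz P j / 2 * (3/2 / sz P j) + (\<Sum>l\<in>{1..j-1}. sz P l * (3 * sz P j / (sz P l)\<^sup>2))" .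
    qed
  qed
  finally show "(\<integral>z. LBb P L z \<partial>SN I) = (\<Sum>j\<in>{1..L}. sz P j * (1 / sz P j)) -
   (\<Sum>j\<in>{2..L}. sz P j / 2 * (3/2 / sz P j) +
      (\<Sum>l\<in>{1..j-1}. sz P l * (3 * sz P j / (sz P l)\<^sup>2)))" .
qed

definition mm :: "nat \<Rightarrow> nat \<Rightarrow> nat" where "mm n k = n div k"
definition qq :: "nat \<Rightarrow> nat \<Rightarrow> nat" where "qq n k = nat \<lfloor>log 128 (real (mm n k))\<rfloor>"
definition LL :: "nat \<Rightarrow> nat \<Rightarrow> nat" where "LL n k = qq n k + 1"
definition GG :: "nat \<Rightarrow> nat \<Rightarrow> nat \<Rightarrow> nat" where "GG n k j = (\<Sum>d<LL n k - j. 64 ^ d)"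
definition lo :: "nat \<Rightarrow> nat \<Rightarrow> nat \<Rightarrow> nat" where "lo n k b = (b - 1) * mm n k"
definition hi :: "nat \<Rightarrow> nat \<Rightarrow> nat \<Rightarrow> nat" where "hi n k b = (if b = k then n else b * mm n k)"
definition EE :: "nat \<Rightarrow> nat \<Rightarrow> nat \<Rightarrow> nat \<Rightarrow> nat" where
  "EE n k b j = (if j = 0 then lo n k b else hi n k b - GG n k j)"
definition PP :: "nat \<Rightarrow> nat \<Rightarrow> nat \<Rightarrow> nat \<Rightarrow> nat set" where
  "PP n k b j = {EE n k b (j - 1)<..EE n k b j} \<inter> {1..n}"
definition bb :: "nat \<Rightarrow> nat \<Rightarrow> nat \<Rightarrow> nat" where "bb n k i = min k ((i - 1) div mm n k + 1)"

lemma geo_le: "(\<Sum>d<q+1. (64::nat) ^ d) \<le> 128 ^ q"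
proof (induction q)
  case 0 then show ?case by simp
next
  case (Suc q)
  have "(\<Sum>d<Suc q + 1. (64::nat) ^ d) = (\<Sum>d<q + 1. 64 ^ d) + 64 ^ (q + 1)" by simp
  also have "\<dots> \<le> 128 ^ q + 64 ^ (q + 1)" using Suc by simp
  also have "64 ^ (q + 1) \<le> (127::nat) * 128 ^ q"
  proof -
    have "(64::nat) ^ q \<le> 128 ^ q" by (intro power_mono) auto
    then show ?thesis by simp
  qed
  then have "128 ^ q + 64 ^ (q + 1) \<le> (128::nat) ^ Suc q" by simp
  finally show ?case .
qed

context
  fixes n k :: nat
  assumes k1: "1 \<le> k" and kn: "k \<le> n"
begin

lemma mm_pos: "1 \<le> mm n k"
proof -
  have "k div k \<le> n div k" by (rule div_le_mono[OF kn])
  then show ?thesis unfolding mm_def using k1 by simp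
qed

lemma km_le: "k * mm n k \<le> n"
  unfolding mm_def by (simp add: mult.commute)

lemma q_bounds: "128 ^ qq n k \<le> mm n k" "ln (real (mm n k)) < real (LL n k) * ln 128"
proof -
  have m1: "real (mm n k) \<ge> 1" using mm_pos by simp
  have lg0: "log 128 (real (mm n k)) \<ge> 0" using m1 by simp
  have qe: "real (qq n k) = of_int \<lfloor>log 128 (real (mm n k))\<rfloor>"
    unfolding qq_def using lg0 by simp
  have h1: "real (qq n k) \<le> log 128 (real (mm n k))" unfolding qe by (rule of_int_floor_le)
  have h2: "log 128 (real (mm n k)) < real (qq n k) + 1" unfolding qe by linarith
  have "real (128 ^ qq n k) = 128 powr real (qq n k)" by (simp add: powr_realpow)
  also have "\<dots> \<le> 128 powr log 128 (real (mm n k))" using h1 by (intro powr_mono) auto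
  also have "\<dots> = real (mm n k)" using m1 by simp
  finally show "128 ^ qq n k \<le> mm n k" by linarith
  have "ln (real (mm n k)) = log 128 (real (mm n k)) * ln 128" by (simp add: log_def)
  also have "\<dots> < (real (qq n k) + 1) * ln 128" using h2 by (intro mult_strict_right_mono) auto
  finally show "ln (real (mm n k)) < real (LL n k) * ln 128" unfolding LL_def by (simp add: add.commute)
qed

lemma GG_L: "GG n k (LL n k) = 0" unfolding GG_def by simp

lemma GG_step: "1 \<le> j \<Longrightarrow> j \<le> LL n k \<Longrightarrow> GG n k (j - 1) = GG n k j + 64 ^ (LL n k - j)"
  unfolding GG_def
proof -
  assume "1 \<le> j" "j \<le> LL n k"
  then have "LL n k - (j - 1) = Suc (LL n k - j)" by simp
  then show "(\<Sum>d<LL n k - (j - 1). (64::nat) ^ d) = (\<Sum>d<LL n k - j. 64 ^ d) + 64 ^ (LL n k - j)"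
    by simp
qed

lemma GG1: "GG n k 1 + 64 ^ qq n k \<le> mm n k"
proof -
  have "GG n k 1 + 64 ^ qq n k = (\<Sum>d<qq n k + 1. (64::nat) ^ d)"
    unfolding GG_def LL_def by simp
  also have "\<dots> \<le> 128 ^ qq n k" by (rule geo_le)
  also have "\<dots> \<le> mm n k" by (rule q_bounds(1))
  finally show ?thesis .
qed

lemma hi_lo: "b \<in> {1..k} \<Longrightarrow> lo n k b + mm n k \<le> hi n k b \<and> hi n k b \<le> n"
proof -
  assume b: "b \<in> {1..k}"
  have "b * mm n k \<le> k * mm n k" using b by (intro mult_right_mono) auto
  then have bn: "b * mm n k \<le> n" using km_le by linarith
  have "lo n k b + mm n k = b * mm n k" unfolding lo_def using b
    by (cases b) auto
  then show ?thesis unfolding hi_def using bn b by auto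
qed

lemma GG_mono: "j \<le> j' \<Longrightarrow> GG n k j' \<le> GG n k j"
  unfolding GG_def by (intro sum_mono2) auto

lemma GG_le1: "1 \<le> j \<Longrightarrow> GG n k j \<le> GG n k 1" by (rule GG_mono)

lemma EE_vals:
  assumes b: "b \<in> {1..k}"
  shows "EE n k b 0 = lo n k b" "EE n k b (LL n k) = hi n k b"
    and "\<And>j. 1 \<le> j \<Longrightarrow> j \<le> LL n k \<Longrightarrow> EE n k b (j - 1) \<le> EE n k b j"
    and "\<And>j. 2 \<le> j \<Longrightarrow> j \<le> LL n k \<Longrightarrow> EE n k b j - EE n k b (j - 1) = 64 ^ (LL n k - j)"
    and "EE n k b 1 - EE n k b 0 \<ge> 64 ^ qq n k"
    and "\<And>j. EE n k b j \<le> n"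
proof -
  have hl: "lo n k b + mm n k \<le> hi n k b" "hi n k b \<le> n" using hi_lo[OF b] by auto
  have G1: "GG n k 1 + 64 ^ qq n k \<le> mm n k" by (rule GG1)
  show "EE n k b 0 = lo n k b" unfolding EE_def by simp
  show "EE n k b (LL n k) = hi n k b" unfolding EE_def LL_def GG_def by simp
  show E1: "EE n k b 1 - EE n k b 0 \<ge> 64 ^ qq n k" unfolding EE_def using hl G1 by simp
  show "EE n k b j \<le> n" for j unfolding EE_def using hl by auto
  show "EE n k b (j - 1) \<le> EE n k b j" if "1 \<le> j" "j \<le> LL n k" for j
  proof (cases "j = 1")
    case True
    have "0 < EE n k b 1 - EE n k b 0" using E1 by (rule less_le_trans[rotated]) simp
    then show ?thesis using True by simp
  next
    case False
    have "GG n k j \<le> GG n k (j - 1)" by (rule GG_mono) simp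
    then show ?thesis unfolding EE_def using False that by (auto intro: diff_le_mono2)
  qed
  show "EE n k b j - EE n k b (j - 1) = 64 ^ (LL n k - j)" if "2 \<le> j" "j \<le> LL n k" for j
  proof -
    have st: "GG n k (j - 1) = GG n k j + 64 ^ (LL n k - j)" using GG_step that by simp
    have "GG n k (j - 1) \<le> GG n k 1" using GG_le1 that by simp
    then have "GG n k (j - 1) \<le> hi n k b" using G1 hl by linarith
    then show ?thesis unfolding EE_def using that st by auto
  qed
qed


lemma PP_eq: "b \<in> {1..k} \<Longrightarrow> PP n k b j = {EE n k b (j - 1)<..EE n k b j}"
proof -
  assume b: "b \<in> {1..k}"
  have "EE n k b j \<le> n" by (rule EE_vals(6)[OF b])
  then show ?thesis unfolding PP_def by auto
qed

lemma union_intervals: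
  fixes E :: "nat \<Rightarrow> nat"
  assumes "\<And>j. 1 \<le> j \<Longrightarrow> j \<le> J \<Longrightarrow> E (j - 1) \<le> E j"
  shows "(\<Union>j\<in>{1..J}. {E (j - 1)<..E j}) = {E 0<..E J}"
  using assms
proof (induction J)
  case 0 then show ?case by simp
next
  case (Suc J)
  have IH: "(\<Union>j\<in>{1..J}. {E (j - 1)<..E j}) = {E 0<..E J}" using Suc by simp
  have step: "\<And>j. 1 \<le> j \<Longrightarrow> j \<le> Suc J \<Longrightarrow> E (j - 1) \<le> E j" using Suc.prems by blast
  have mono: "E 0 \<le> E J"
  proof -
    have "E 0 \<le> E j" if "j \<le> J" for j
      using that
    proof (induction j)
      case 0 then show ?case by simp
    next
      case (Suc j)
      then show ?case using step[of "Suc j"] by simp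
    qed
    then show ?thesis by simp
  qed
  have "{1..Suc J} = insert (Suc J) {1..J}" by auto
  then have "(\<Union>j\<in>{1..Suc J}. {E (j - 1)<..E j}) = {E J<..E (Suc J)} \<union> {E 0<..E J}"
    using IH by simp
  also have "\<dots> = {E 0<..E (Suc J)}" using mono step[of "Suc J"] by auto
  finally show ?case .
qed

lemma block_union: "b \<in> {1..k} \<Longrightarrow> (\<Union>j\<in>{1..LL n k}. PP n k b j) = {lo n k b<..hi n k b}"
  using union_intervals[of "LL n k" "EE n k b"] EE_vals[of b] by (simp add: PP_eq)

lemma PP_card: "b \<in> {1..k} \<Longrightarrow> j \<in> {1..LL n k} \<Longrightarrow> card (PP n k b j) = EE n k b j - EE n k b (j - 1)"
  by (simp add: PP_eq)

lemma PP_props: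
  assumes b: "b \<in> {1..k}"
  shows "\<forall>j\<in>{1..LL n k}. finite (PP n k b j) \<and> PP n k b j \<noteq> {}"
    and "\<forall>j\<in>{1..LL n k}. \<forall>j'\<in>{1..LL n k}. j < j' \<longrightarrow> (\<forall>i\<in>PP n k b j. \<forall>i'\<in>PP n k b j'. i < i')"
    and "\<forall>j. PP n k b j \<subseteq> {1..n}"
    and "\<forall>j\<in>{2..LL n k}. sz (PP n k b) j = 64 ^ (LL n k - j)"
    and "sz (PP n k b) 1 \<ge> 64 ^ qq n k"
proof -
  have pos: "EE n k b (j - 1) < EE n k b j" if "j \<in> {1..LL n k}" for j
  proof (cases "j = 1")
    case True
    have "0 < EE n k b 1 - EE n k b 0" using EE_vals(5)[OF b] by (rule less_le_trans[rotated]) simp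
    then show ?thesis using True by simp
  next
    case False
    then have "EE n k b j - EE n k b (j - 1) = 64 ^ (LL n k - j)" using EE_vals(4)[OF b] that by auto
    then show ?thesis by (metis diff_is_0_eq' not_le power_not_zero zero_neq_numeral)
  qed
  show "\<forall>j\<in>{1..LL n k}. finite (PP n k b j) \<and> PP n k b j \<noteq> {}"
    using pos by (auto simp: PP_eq[OF b])
  have Em: "EE n k b j \<le> EE n k b j'" if "j \<le> j'" "j' \<le> LL n k" for j j'
    using that
  proof (induction j')
    case 0 then show ?case by simp
  next
    case (Suc j')
    show ?case
    proof (cases "j = Suc j'")
      case True then show ?thesis by simp
    next
      case False
      then have "EE n k b j \<le> EE n k b j'" using Suc by simp
      also have "\<dots> \<le> EE n k b (Suc j')" using EE_vals(3)[OF b, of "Suc j'"] Suc by simp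
      finally show ?thesis .
    qed
  qed
  show "\<forall>j\<in>{1..LL n k}. \<forall>j'\<in>{1..LL n k}. j < j' \<longrightarrow> (\<forall>i\<in>PP n k b j. \<forall>i'\<in>PP n k b j'. i < i')"
  proof (intro ballI impI)
    fix j j' i i' assume j: "j \<in> {1..LL n k}" and j': "j' \<in> {1..LL n k}" and jj: "j < j'"
      and i: "i \<in> PP n k b j" and i': "i' \<in> PP n k b j'"
    have "i \<le> EE n k b j" using i by (simp add: PP_eq[OF b])
    also have "\<dots> \<le> EE n k b (j' - 1)" using Em[of j "j' - 1"] jj j' by simp
    also have "\<dots> < i'" using i' by (simp add: PP_eq[OF b])
    finally show "i < i'" .
  qed
  show "\<forall>j. PP n k b j \<subseteq> {1..n}" unfolding PP_def by auto
  show "\<forall>j\<in>{2..LL n k}. sz (PP n k b) j = 64 ^ (LL n k - j)"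
    using EE_vals(4)[OF b] PP_card[OF b] unfolding sz_def by auto
  have "LL n k \<ge> 1" unfolding LL_def by simp
  then show "sz (PP n k b) 1 \<ge> 64 ^ qq n k"
    using EE_vals(5)[OF b] PP_card[OF b, of 1] unfolding sz_def by simp
qed

lemma bb_block: "b \<in> {1..k} \<Longrightarrow> {i\<in>{1..n}. bb n k i = b} = {lo n k b<..hi n k b}"
proof -
  assume b: "b \<in> {1..k}"
  have m: "0 < mm n k" using mm_pos by simp
  have hl: "lo n k b + mm n k \<le> hi n k b" "hi n k b \<le> n" using hi_lo[OF b] by auto
  have lob: "lo n k b = (b - 1) * mm n k" unfolding lo_def ..
  show ?thesis
  proof (intro set_eqI iffI)
    fix i assume "i \<in> {i\<in>{1..n}. bb n k i = b}"
    then have i: "1 \<le> i" "i \<le> n" and bi: "min k ((i - 1) div mm n k + 1) = b" unfolding bb_def by auto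
    have "b - 1 \<le> (i - 1) div mm n k" using bi by linarith
    then have "(b - 1) * mm n k \<le> i - 1" using less_eq_div_iff_mult_less_eq[OF m] by simp
    then have lo_i: "lo n k b < i" unfolding lob using i by linarith
    have "i \<le> hi n k b"
    proof (cases "b = k")
      case True then show ?thesis unfolding hi_def using i by simp
    next
      case False
      then have "(i - 1) div mm n k + 1 = b" using bi by linarith
      then have "(i - 1) div mm n k < b" by simp
      then have "i - 1 < b * mm n k" using div_less_iff_less_mult[OF m] by simp
      then show ?thesis unfolding hi_def using False by simp
    qed
    with lo_i show "i \<in> {lo n k b<..hi n k b}" by simp
  next
    fix i assume "i \<in> {lo n k b<..hi n k b}"
    then have i: "lo n k b < i" "i \<le> hi n k b" by auto
    have i1: "1 \<le> i" "i \<le> n" using i hl by auto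
    have "(b - 1) * mm n k \<le> i - 1" using i(1) unfolding lob by linarith
    then have d1: "b - 1 \<le> (i - 1) div mm n k" using less_eq_div_iff_mult_less_eq[OF m] by simp
    have "bb n k i = b"
    proof (cases "b = k")
      case True
      then show ?thesis unfolding bb_def using d1 b by auto
    next
      case False
      then have "i - 1 < b * mm n k" using i(2) i1 unfolding hi_def by simp
      then have "(i - 1) div mm n k < b" using div_less_iff_less_mult[OF m] by simp
      then show ?thesis unfolding bb_def using d1 b False by auto
    qed
    with i1 show "i \<in> {i\<in>{1..n}. bb n k i = b}" by simp
  qed
qed

lemma bb_range: "i \<in> {1..n} \<Longrightarrow> bb n k i \<in> {1..k}"
  unfolding bb_def using k1 by auto

lemma bb_mono: "i \<le> i' \<Longrightarrow> bb n k i \<le> bb n k i'"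
  unfolding bb_def by (intro min.mono order.refl add_right_mono div_le_mono diff_le_mono)

end

lemma geo_sum: "j \<ge> 1 \<Longrightarrow> (\<Sum>l\<in>{1..j-1}. (1/64::real) ^ (j - l)) \<le> 1/63"
proof (induction j rule: nat_induct_at_least)
  case base then show ?case by simp
next
  case (Suc j)
  have "{1..Suc j - 1} = insert j {1..j-1}" using Suc by auto
  then have "(\<Sum>l\<in>{1..Suc j - 1}. (1/64::real) ^ (Suc j - l)) = (\<Sum>l\<in>insert j {1..j-1}. (1/64::real) ^ (Suc j - l))"
    by simp
  also have "\<dots> = (1/64) ^ (Suc j - j) + (\<Sum>l\<in>{1..j-1}. (1/64) ^ (Suc j - l))"
    by (rule sum.insert) auto
  also have "(\<Sum>l\<in>{1..j-1}. (1/64::real) ^ (Suc j - l)) = (1/64) * (\<Sum>l\<in>{1..j-1}. (1/64) ^ (j - l))"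
    unfolding sum_distrib_left by (intro sum.cong refl) (auto simp: Suc_diff_le)
  finally have "(\<Sum>l\<in>{1..Suc j - 1}. (1/64::real) ^ (Suc j - l)) = 1/64 + (1/64) * (\<Sum>l\<in>{1..j-1}. (1/64) ^ (j - l))"
    by simp
  also have "\<dots> \<le> 1/64 + (1/64) * (1/63)" using Suc by simp
  also have "\<dots> = 1/63" by simp
  finally show ?case .
qed

lemma arith_aux: "(X::real) \<le> (Lr - 1) * (3/4 + 3/63) \<Longrightarrow> 1 \<le> Lr \<Longrightarrow> Lr / 5 \<le> Lr - X"
  by (simp add: algebra_simps)

context
  fixes n k :: nat
  assumes k1: "1 \<le> k" and kn: "k \<le> n"
begin

lemma ratio: assumes b: "b \<in> {1..k}" and l: "1 \<le> l" "l < j" and j: "j \<le> LL n k"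
  shows "sz (PP n k b) j / sz (PP n k b) l \<le> (1/64) ^ (j - l)"
proof -
  have sj: "sz (PP n k b) j = 64 ^ (LL n k - j)" using PP_props(4)[OF k1 kn b] l j by auto
  have sl: "sz (PP n k b) l \<ge> 64 ^ (LL n k - l)"
  proof (cases "l = 1")
    case True then show ?thesis using PP_props(5)[OF k1 kn b] unfolding LL_def by simp
  next
    case False then show ?thesis using PP_props(4)[OF k1 kn b] l j by auto
  qed
  have pos: "(0::real) < 64 ^ (LL n k - l)" by simp
  have "sz (PP n k b) j / sz (PP n k b) l \<le> 64 ^ (LL n k - j) / 64 ^ (LL n k - l)"
  proof -
    have sp: "sz (PP n k b) l > 0" using sl pos by linarith
    have "0 < sz (PP n k b) l * 64 ^ (LL n k - l)" using sp pos by (rule mult_pos_pos)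
    then show ?thesis unfolding sj by (intro divide_left_mono[OF sl]) auto
  qed
  also have "(64::real) ^ (LL n k - l) = 64 ^ (LL n k - j) * 64 ^ (j - l)"
    using l j by (simp add: power_add[symmetric])
  also have "64 ^ (LL n k - j) / (64 ^ (LL n k - j) * 64 ^ (j - l)) = (1/64::real) ^ (j - l)"
    by (simp add: power_one_over)
  finally show ?thesis .
qed

lemma block_E:
  assumes b: "b \<in> {1..k}"
  shows "integrable (SN {1..n}) (LBb (PP n k b) (LL n k))"
    and "(\<integral>z. LBb (PP n k b) (LL n k) z \<partial>SN {1..n}) \<ge> real (LL n k) / 5"
proof -
  let ?P = "PP n k b" and ?L = "LL n k"
  have Psub: "\<forall>j\<in>{1..?L}. ?P j \<subseteq> {1..n}" using PP_props(3)[OF k1 kn b] by auto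
  show "integrable (SN {1..n}) (LBb ?P ?L)" by (rule LBb_int(1)[OF _ Psub]) simp
  have szp: "sz ?P j > 0" if "j \<in> {1..?L}" for j
    using PP_props(1)[OF k1 kn b] that unfolding sz_def by (auto simp: card_gt_0_iff)
  have A: "(\<Sum>j\<in>{1..?L}. sz ?P j * (1 / sz ?P j)) = real ?L"
  proof -
    have "(\<Sum>j\<in>{1..?L}. sz ?P j * (1 / sz ?P j)) = (\<Sum>j\<in>{1..?L}. 1)"
      using szp by (intro sum.cong refl) (metis less_irrefl nonzero_mult_div_cancel_left mult_1_right times_divide_eq_right)
    then show ?thesis by simp
  qed
  have B: "sz ?P j / 2 * (3/2 / sz ?P j) + (\<Sum>l\<in>{1..j-1}. sz ?P l * (3 * sz ?P j / (sz ?P l)\<^sup>2)) \<le> 3/4 + 3/63"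
    if j: "j \<in> {2..?L}" for j
  proof -
    have "sz ?P j / 2 * (3/2 / sz ?P j) = 3/4" using szp[of j] j by simp
    moreover have "(\<Sum>l\<in>{1..j-1}. sz ?P l * (3 * sz ?P j / (sz ?P l)\<^sup>2)) \<le> 3 * (1/63)"
    proof -
      have "(\<Sum>l\<in>{1..j-1}. sz ?P l * (3 * sz ?P j / (sz ?P l)\<^sup>2)) = 3 * (\<Sum>l\<in>{1..j-1}. sz ?P j / sz ?P l)"
        unfolding sum_distrib_left using szp j by (intro sum.cong refl) (auto simp: power2_eq_square)
      also have "\<dots> \<le> 3 * (\<Sum>l\<in>{1..j-1}. (1/64) ^ (j - l))"
        using j by (intro mult_left_mono sum_mono ratio[OF b]) auto
      also have "\<dots> \<le> 3 * (1/63)" using geo_sum[of j] j by simp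
      finally show ?thesis .
    qed
    ultimately show ?thesis by simp
  qed
  have "(\<Sum>j\<in>{2..?L}. sz ?P j / 2 * (3/2 / sz ?P j) + (\<Sum>l\<in>{1..j-1}. sz ?P l * (3 * sz ?P j / (sz ?P l)\<^sup>2)))
      \<le> (\<Sum>j\<in>{2..?L}. 3/4 + 3/63)" using B by (rule sum_mono)
  also have "\<dots> = (real ?L - 1) * (3/4 + 3/63)" unfolding LL_def by simp
  finally have C: "(\<Sum>j\<in>{2..?L}. sz ?P j / 2 * (3/2 / sz ?P j) + (\<Sum>l\<in>{1..j-1}. sz ?P l * (3 * sz ?P j / (sz ?P l)\<^sup>2)))
      \<le> (real ?L - 1) * (3/4 + 3/63)" .
  have L1: "real ?L \<ge> 1" unfolding LL_def by simp
  have I: "(\<integral>z. LBb ?P ?L z \<partial>SN {1..n}) = (\<Sum>j\<in>{1..?L}. sz ?P j * (1 / sz ?P j)) -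
   (\<Sum>j\<in>{2..?L}. sz ?P j / 2 * (3/2 / sz ?P j) +
      (\<Sum>l\<in>{1..j-1}. sz ?P l * (3 * sz ?P j / (sz ?P l)\<^sup>2)))"
    by (rule LBb_int(2)[OF _ Psub]) simp
  show "(\<integral>z. LBb ?P ?L z \<partial>SN {1..n}) \<ge> real ?L / 5"
    unfolding I A using arith_aux[OF C L1] .
qed

end

definition LBall :: "nat \<Rightarrow> nat \<Rightarrow> (nat \<Rightarrow> real) \<Rightarrow> real" where
  "LBall n k z = (\<Sum>b\<in>{1..k}. LBb (PP n k b) (LL n k) z)"

definition thN :: "nat \<Rightarrow> nat \<Rightarrow> real \<Rightarrow> nat \<Rightarrow> real" where
  "thN n k N = restrict (\<lambda>i. N * real (bb n k i)) {1..n}"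

context
  fixes n k :: nat
  assumes k1: "1 \<le> k" and kn: "k \<le> n"
begin

lemma thN_in: "N \<ge> 0 \<Longrightarrow> thN n k N \<in> Theta_up n k"
proof -
  assume N: "N \<ge> 0"
  define a where "a = (\<lambda>j. if j = 0 then 0 else hi n k j)"
  define \<mu> where "\<mu> = (\<lambda>j::nat. N * real j)"
  have alo: "a (j - 1) = lo n k j" if "j \<in> {1..k}" for j
  proof (cases "j = 1")
    case True then show ?thesis unfolding a_def lo_def by simp
  next
    case False
    then have "j - 1 \<noteq> k" "j - 1 \<noteq> 0" using that by auto
    then show ?thesis unfolding a_def hi_def lo_def by simp
  qed
  have ahi: "a j = hi n k j" if "j \<in> {1..k}" for j using that unfolding a_def by simp
  show ?thesis unfolding Theta_up_def
  proof (intro CollectI conjI exI[of _ a] exI[of _ \<mu>])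
    show "thN n k N \<in> extensional {1..n}" unfolding thN_def by simp
    show "a 0 = 0" unfolding a_def by simp
    show "a k = n" unfolding a_def hi_def using k1 by simp
    show "\<forall>j. 1 \<le> j \<and> j \<le> k \<longrightarrow> a (j - 1) \<le> a j"
      using alo ahi hi_lo[OF k1 kn] by fastforce
    show "\<forall>j. 1 \<le> j \<and> j < k \<longrightarrow> \<mu> j \<le> \<mu> (j + 1)"
      unfolding \<mu>_def using N by (auto intro: mult_left_mono)
    show "\<forall>j i. 1 \<le> j \<and> j \<le> k \<and> a (j - 1) < i \<and> i \<le> a j \<longrightarrow> thN n k N i = \<mu> j"
    proof (intro allI impI)
      fix j i assume h: "1 \<le> j \<and> j \<le> k \<and> a (j - 1) < i \<and> i \<le> a j"
      then have j: "j \<in> {1..k}" by simp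
      have "i \<in> {lo n k j<..hi n k j}" using h alo[OF j] ahi[OF j] by simp
      then have "i \<in> {i\<in>{1..n}. bb n k i = j}" using bb_block[OF k1 kn j] by simp
      then show "thN n k N i = \<mu> j" unfolding thN_def \<mu>_def by simp
    qed
  qed
qed

lemma pathwise:
  assumes s: "\<sigma> > 0" and small: "\<forall>i\<in>{1..n}. \<bar>x i - thN n k N i\<bar> < N / 2"
  shows "sqdist_n n (iso_est n x) (thN n k N) \<ge> \<sigma>\<^sup>2 * LBall n k (\<lambda>i. (x i - thN n k N i) / \<sigma>)"
proof -
  let ?I = "{1..n}" and ?ts = "thN n k N" and ?\<beta> = "bb n k"
  define w where "w = (\<lambda>i. (x i - thN n k N i) / \<sigma>)"
  have bm: "\<forall>i\<in>?I. \<forall>i'\<in>?I. i \<le> i' \<longrightarrow> ?\<beta> i \<le> ?\<beta> i'" using bb_mono[OF k1 kn] by blast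
  have ts: "\<forall>i\<in>?I. ?ts i = N * real (?\<beta> i)" unfolding thN_def by simp
  obtain q where qm: "monoI ?I q" and qopt: "\<forall>\<eta>. monoI ?I \<eta> \<longrightarrow> cst ?I x q \<le> cst ?I x \<eta>"
    and qb: "\<forall>b u. monoI {i\<in>?I. ?\<beta> i = b} u \<longrightarrow>
        2 * (\<Sum>i\<in>{i\<in>?I. ?\<beta> i = b}. (x i - ?ts i) * u i) - (\<Sum>i\<in>{i\<in>?I. ?\<beta> i = b}. (u i)\<^sup>2)
          \<le> (\<Sum>i\<in>{i\<in>?I. ?\<beta> i = b}. (q i - ?ts i)\<^sup>2)"
    using decouple[OF _ bm small ts] by blast
  have iso: "iso_est n x = restrict q ?I"
  proof (rule iso_est_eq)
    show "restrict q ?I \<in> extensional ?I" by simp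
    show "monoI ?I (restrict q ?I)" using qm unfolding monoI_def by simp
    have "cst ?I x (restrict q ?I) = cst ?I x q" unfolding cst_def by (intro sum.cong) auto
    then show "\<forall>\<eta>. monoI ?I \<eta> \<longrightarrow> cst ?I x (restrict q ?I) \<le> cst ?I x \<eta>" using qopt by simp
  qed
  have "sqdist_n n (iso_est n x) ?ts = (\<Sum>i\<in>?I. (q i - ?ts i)\<^sup>2)"
    unfolding iso sqdist_n_def by (intro sum.cong) auto
  also have "\<dots> = (\<Sum>b\<in>{1..k}. \<Sum>i\<in>{i\<in>?I. ?\<beta> i = b}. (q i - ?ts i)\<^sup>2)"
    using bb_range[OF k1 kn] by (intro sum.group[symmetric]) auto
  finally have eq: "sqdist_n n (iso_est n x) ?ts = (\<Sum>b\<in>{1..k}. \<Sum>i\<in>{i\<in>?I. ?\<beta> i = b}. (q i - ?ts i)\<^sup>2)" .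
  have blk: "\<sigma>\<^sup>2 * LBb (PP n k b) (LL n k) w \<le> (\<Sum>i\<in>{i\<in>?I. ?\<beta> i = b}. (q i - ?ts i)\<^sup>2)"
    if b: "b \<in> {1..k}" for b
  proof -
    have L1: "LL n k \<ge> 1" unfolding LL_def by simp
    have Beq: "{i\<in>?I. ?\<beta> i = b} = (\<Union>j\<in>{1..LL n k}. PP n k b j)"
      using bb_block[OF k1 kn b] block_union[OF k1 kn b] by simp
    obtain u' where u'm: "monoI (\<Union>j\<in>{1..LL n k}. PP n k b j) u'"
      and u'b: "LBb (PP n k b) (LL n k) w \<le> 2 * (\<Sum>i\<in>(\<Union>j\<in>{1..LL n k}. PP n k b j). w i * u' i) -
          (\<Sum>i\<in>(\<Union>j\<in>{1..LL n k}. PP n k b j). (u' i)\<^sup>2)"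
      using block_lb[OF L1 PP_props(1)[OF k1 kn b] PP_props(2)[OF k1 kn b], of w] by blast
    let ?u = "\<lambda>i. \<sigma> * u' i"
    have um: "monoI {i\<in>?I. ?\<beta> i = b} ?u" using u'm s unfolding Beq monoI_def by (auto intro: mult_left_mono)
    have "\<sigma>\<^sup>2 * LBb (PP n k b) (LL n k) w \<le> \<sigma>\<^sup>2 * (2 * (\<Sum>i\<in>{i\<in>?I. ?\<beta> i = b}. w i * u' i) -
          (\<Sum>i\<in>{i\<in>?I. ?\<beta> i = b}. (u' i)\<^sup>2))"
      using u'b unfolding Beq by (intro mult_left_mono) auto
    also have "\<dots> = 2 * (\<Sum>i\<in>{i\<in>?I. ?\<beta> i = b}. (x i - ?ts i) * ?u i) - (\<Sum>i\<in>{i\<in>?I. ?\<beta> i = b}. (?u i)\<^sup>2)"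
    proof -
      have e1: "(\<Sum>i\<in>{i\<in>?I. ?\<beta> i = b}. (x i - ?ts i) * ?u i) = \<sigma>\<^sup>2 * (\<Sum>i\<in>{i\<in>?I. ?\<beta> i = b}. w i * u' i)"
        unfolding sum_distrib_left w_def using s by (intro sum.cong refl) (simp add: power2_eq_square field_simps)
      have e2: "(\<Sum>i\<in>{i\<in>?I. ?\<beta> i = b}. (?u i)\<^sup>2) = \<sigma>\<^sup>2 * (\<Sum>i\<in>{i\<in>?I. ?\<beta> i = b}. (u' i)\<^sup>2)"
        by (simp add: sum_distrib_left power_mult_distrib)
      show ?thesis unfolding e1 e2 by (simp add: algebra_simps)
    qed
    also have "\<dots> \<le> (\<Sum>i\<in>{i\<in>?I. ?\<beta> i = b}. (q i - ?ts i)\<^sup>2)" using qb um by blast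
    finally show ?thesis .
  qed
  have "\<sigma>\<^sup>2 * LBall n k w = (\<Sum>b\<in>{1..k}. \<sigma>\<^sup>2 * LBb (PP n k b) (LL n k) w)"
    unfolding LBall_def by (simp add: sum_distrib_left)
  also have "\<dots> \<le> (\<Sum>b\<in>{1..k}. \<Sum>i\<in>{i\<in>?I. ?\<beta> i = b}. (q i - ?ts i)\<^sup>2)"
    using blk by (intro sum_mono) auto
  finally show ?thesis unfolding eq w_def .
qed

end

lemma meas_coord_g: "i \<in> {1..n} \<Longrightarrow> (\<lambda>x. x i) \<in> borel_measurable (gauss_n n \<theta> \<sigma>)"
proof -
  assume i: "i \<in> {1..n}"
  have "measurable (gauss_n n \<theta> \<sigma>) (density lborel (normal_density (\<theta> i) \<sigma>)) = measurable (gauss_n n \<theta> \<sigma>) borel"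
    by (rule measurable_cong_sets) auto
  then show ?thesis using measurable_component_singleton[OF i, of "\<lambda>i. density lborel (normal_density (\<theta> i) \<sigma>)"]
    unfolding gauss_n_def by simp
qed

lemma meas_Sb:
  assumes P: "\<forall>j. P j \<subseteq> I" and g: "\<forall>i\<in>I. (\<lambda>x. g x i) \<in> borel_measurable N"
  shows "(\<lambda>x. Sb P (g x) j) \<in> borel_measurable N"
  unfolding Sb_def using P g by (intro borel_measurable_sum) auto

lemma meas_LBb:
  assumes P: "\<forall>j. P j \<subseteq> I" and g: "\<forall>i\<in>I. (\<lambda>x. g x i) \<in> borel_measurable N"
  shows "(\<lambda>x. LBb P L (g x)) \<in> borel_measurable N"
proof -
  have [measurable]: "(\<lambda>x. Sb P (g x) j) \<in> borel_measurable N" for j by (rule meas_Sb[OF P g])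
  show ?thesis unfolding LBb_def by measurable
qed

lemma meas_LBall:
  assumes g: "\<forall>i\<in>{1..n}. (\<lambda>x. g x i) \<in> borel_measurable N"
  shows "(\<lambda>x. LBall n k (g x)) \<in> borel_measurable N"
proof -
  have P: "\<forall>j. PP n k b j \<subseteq> {1..n}" for b unfolding PP_def by auto
  show ?thesis unfolding LBall_def by (intro borel_measurable_sum meas_LBb[OF P g])
qed

lemma LBall_cong: "(\<forall>i\<in>{1..n}. z i = z' i) \<Longrightarrow> LBall n k z = LBall n k z'"
proof -
  assume h: "\<forall>i\<in>{1..n}. z i = z' i"
  have "Sb (PP n k b) z j = Sb (PP n k b) z' j" for b j
    unfolding Sb_def using h by (intro sum.cong refl) (auto simp: PP_def)
  then show ?thesis unfolding LBall_def LBb_def by simp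
qed

context
  fixes n k :: nat
  assumes k1: "1 \<le> k" and kn: "k \<le> n"
begin

lemma LBall_E: "integrable (SN {1..n}) (LBall n k)"
  "(\<integral>z. LBall n k z \<partial>SN {1..n}) \<ge> real k * real (LL n k) / 5"
proof -
  show "integrable (SN {1..n}) (LBall n k)"
    unfolding LBall_def[abs_def] by (intro Bochner_Integration.integrable_sum block_E(1)[OF k1 kn]) auto
  have "(\<integral>z. LBall n k z \<partial>SN {1..n}) = (\<Sum>b\<in>{1..k}. (\<integral>z. LBb (PP n k b) (LL n k) z \<partial>SN {1..n}))"
    unfolding LBall_def by (intro Bochner_Integration.integral_sum block_E(1)[OF k1 kn]) auto
  also have "\<dots> \<ge> (\<Sum>b\<in>{1..k}. real (LL n k) / 5)"
    by (intro sum_mono block_E(2)[OF k1 kn]) auto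
  finally show "(\<integral>z. LBall n k z \<partial>SN {1..n}) \<ge> real k * real (LL n k) / 5" by simp
qed

lemma main_bound:
  assumes s: "\<sigma> > 0"
  shows "(SUP \<theta>\<in>Theta_up n k. \<integral>\<^sup>+ x. ennreal (sqdist_n n (iso_est n x) \<theta>) \<partial>gauss_n n \<theta> \<sigma>)
      \<ge> ennreal (\<sigma>\<^sup>2 * (real k * real (LL n k) / 5))"
proof -
  let ?I = "{1..n}"
  define h where "h = (\<lambda>(N::nat) z. if \<forall>i\<in>?I. \<sigma> * \<bar>z i\<bar> < real N / 2 then ennreal (\<sigma>\<^sup>2 * LBall n k z) else 0)"
  define F where "F = (\<lambda>z. ennreal (\<sigma>\<^sup>2 * LBall n k z))"
  have coordSN: "\<forall>i\<in>?I. (\<lambda>z. z i) \<in> borel_measurable (SN ?I)" using meas_coord by blast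
  have LBm: "(\<lambda>z. LBall n k z) \<in> borel_measurable (SN ?I)" using meas_LBall[OF coordSN] by simp
  have hm: "h N \<in> borel_measurable (SN ?I)" for N
  proof -
    have [measurable]: "(\<lambda>z. LBall n k z) \<in> borel_measurable (SN ?I)" by (rule LBm)
    have [measurable]: "i \<in> ?I \<Longrightarrow> (\<lambda>z. z i) \<in> borel_measurable (SN ?I)" for i using coordSN by blast
    show ?thesis unfolding h_def by measurable
  qed
  have inc: "incseq h"
  proof (rule incseq_SucI, rule le_funI)
    fix N z
    show "h N z \<le> h (Suc N) z" unfolding h_def by (auto simp: not_less)
  qed
  have sup: "(SUP N. h N z) = F z" for z
  proof (rule antisym)
    show "(SUP N. h N z) \<le> F z" unfolding h_def F_def by (intro SUP_least) auto
    obtain N :: nat where N: "real N > 2 * \<sigma> * (\<Sum>i\<in>?I. \<bar>z i\<bar>)" using reals_Archimedean2 by blast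
    have "\<forall>i\<in>?I. \<sigma> * \<bar>z i\<bar> < real N / 2"
    proof
      fix i assume "i \<in> ?I"
      then have "\<bar>z i\<bar> \<le> (\<Sum>i\<in>?I. \<bar>z i\<bar>)" by (intro member_le_sum) auto
      then have "\<sigma> * \<bar>z i\<bar> \<le> \<sigma> * (\<Sum>i\<in>?I. \<bar>z i\<bar>)" using s by (intro mult_left_mono) auto
      then show "\<sigma> * \<bar>z i\<bar> < real N / 2" using N by linarith
    qed
    then have "h N z = F z" unfolding h_def F_def by simp
    then show "F z \<le> (SUP N. h N z)" by (metis SUP_upper UNIV_I)
  qed
  have step: "(\<integral>\<^sup>+ z. h N z \<partial>SN ?I) \<le> (SUP \<theta>\<in>Theta_up n k. \<integral>\<^sup>+ x. ennreal (sqdist_n n (iso_est n x) \<theta>) \<partial>gauss_n n \<theta> \<sigma>)"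
    for N
  proof -
    let ?th = "thN n k (real N)"
    let ?T = "\<lambda>z. \<lambda>i\<in>?I. ?th i + \<sigma> * z i"
    define g where "g = (\<lambda>x. if \<forall>i\<in>?I. \<bar>x i - ?th i\<bar> < real N / 2
        then ennreal (\<sigma>\<^sup>2 * LBall n k (\<lambda>i. (x i - ?th i) / \<sigma>)) else 0)"
    have coordG: "\<forall>i\<in>?I. (\<lambda>x. (x i - ?th i) / \<sigma>) \<in> borel_measurable (gauss_n n ?th \<sigma>)"
      using meas_coord_g by (intro ballI borel_measurable_divide borel_measurable_diff) auto
    have gm: "g \<in> borel_measurable (gauss_n n ?th \<sigma>)"
    proof -
      have [measurable]: "(\<lambda>x. LBall n k (\<lambda>i. (x i - ?th i) / \<sigma>)) \<in> borel_measurable (gauss_n n ?th \<sigma>)"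
        by (rule meas_LBall[OF coordG])
      have [measurable]: "i \<in> ?I \<Longrightarrow> (\<lambda>x. x i) \<in> borel_measurable (gauss_n n ?th \<sigma>)" for i
        using meas_coord_g by blast
      show ?thesis unfolding g_def by measurable
    qed
    have Tm: "?T \<in> measurable (SN ?I) (gauss_n n ?th \<sigma>)"
      unfolding gauss_n_def
      by (intro measurable_restrict) (auto intro!: measurable_compose[OF measurable_component_singleton])
    have "(\<integral>\<^sup>+ z. h N z \<partial>SN ?I) = (\<integral>\<^sup>+ z. g (?T z) \<partial>SN ?I)"
    proof (intro nn_integral_cong)
      fix z :: "nat \<Rightarrow> real"
      have c1: "(\<forall>i\<in>?I. \<bar>?T z i - ?th i\<bar> < real N / 2) = (\<forall>i\<in>?I. \<sigma> * \<bar>z i\<bar> < real N / 2)"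
        using s by (simp add: abs_mult)
      have c2: "LBall n k (\<lambda>i. (?T z i - ?th i) / \<sigma>) = LBall n k z"
        using s by (intro LBall_cong) auto
      show "h N z = g (?T z)" unfolding h_def g_def c1 c2 ..
    qed
    also have "\<dots> = (\<integral>\<^sup>+ x. g x \<partial>distr (SN ?I) (gauss_n n ?th \<sigma>) ?T)"
      by (rule nn_integral_distr[symmetric, OF Tm]) (use gm in simp)
    also have "\<dots> = (\<integral>\<^sup>+ x. g x \<partial>gauss_n n ?th \<sigma>)" using gauss_transl[OF s] by simp
    also have "\<dots> \<le> (\<integral>\<^sup>+ x. ennreal (sqdist_n n (iso_est n x) ?th) \<partial>gauss_n n ?th \<sigma>)"
    proof (intro nn_integral_mono)
      fix x
      show "g x \<le> ennreal (sqdist_n n (iso_est n x) ?th)"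
      proof (cases "\<forall>i\<in>?I. \<bar>x i - ?th i\<bar> < real N / 2")
        case True
        then have "\<sigma>\<^sup>2 * LBall n k (\<lambda>i. (x i - ?th i) / \<sigma>) \<le> sqdist_n n (iso_est n x) ?th"
          using pathwise[OF k1 kn s] by blast
        then show ?thesis unfolding g_def using True by (simp add: ennreal_leI)
      next
        case False
        then have "g x = 0" unfolding g_def by meson
        then show ?thesis by simp
      qed
    qed
    also have "\<dots> \<le> (SUP \<theta>\<in>Theta_up n k. \<integral>\<^sup>+ x. ennreal (sqdist_n n (iso_est n x) \<theta>) \<partial>gauss_n n \<theta> \<sigma>)"
      using thN_in[OF k1 kn, of "real N"] by (intro SUP_upper) auto
    finally show ?thesis .
  qed
  have "(\<integral>\<^sup>+ z. F z \<partial>SN ?I) = (SUP N. \<integral>\<^sup>+ z. h N z \<partial>SN ?I)"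
    unfolding sup[symmetric] by (rule nn_integral_monotone_convergence_SUP[OF inc hm])
  also have "\<dots> \<le> (SUP \<theta>\<in>Theta_up n k. \<integral>\<^sup>+ x. ennreal (sqdist_n n (iso_est n x) \<theta>) \<partial>gauss_n n \<theta> \<sigma>)"
    using step by (intro SUP_least) auto
  finally have A: "(\<integral>\<^sup>+ z. F z \<partial>SN ?I) \<le> (SUP \<theta>\<in>Theta_up n k. \<integral>\<^sup>+ x. ennreal (sqdist_n n (iso_est n x) \<theta>) \<partial>gauss_n n \<theta> \<sigma>)" .
  have intF: "integrable (SN ?I) (\<lambda>z. \<sigma>\<^sup>2 * LBall n k z)" using LBall_E(1) by simp
  have "\<sigma>\<^sup>2 * (real k * real (LL n k) / 5) \<le> (\<integral>z. \<sigma>\<^sup>2 * LBall n k z \<partial>SN ?I)"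
    using LBall_E(2) s by (simp add: mult_left_mono)
  also have "(\<integral>z. \<sigma>\<^sup>2 * LBall n k z \<partial>SN ?I) \<le> (\<integral>z. max 0 (\<sigma>\<^sup>2 * LBall n k z) \<partial>SN ?I)"
    using intF by (intro integral_mono) auto
  finally have r: "\<sigma>\<^sup>2 * (real k * real (LL n k) / 5) \<le> (\<integral>z. max 0 (\<sigma>\<^sup>2 * LBall n k z) \<partial>SN ?I)" .
  have "ennreal (\<sigma>\<^sup>2 * (real k * real (LL n k) / 5)) \<le> ennreal (\<integral>z. max 0 (\<sigma>\<^sup>2 * LBall n k z) \<partial>SN ?I)"
    using r by (rule ennreal_leI)
  also have "ennreal (\<integral>z. max 0 (\<sigma>\<^sup>2 * LBall n k z) \<partial>SN ?I) = (\<integral>\<^sup>+ z. max 0 (\<sigma>\<^sup>2 * LBall n k z) \<partial>SN ?I)"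
    using intF by (intro nn_integral_eq_integral[symmetric]) auto
  also have "\<dots> = (\<integral>\<^sup>+ z. F z \<partial>SN ?I)"
    unfolding F_def by (intro nn_integral_cong) (simp add: ennreal_max_0)
  finally show ?thesis using A by (rule order.trans)
qed

end

lemma log_arith:
  assumes k1: "1 \<le> k" and kn: "k \<le> n"
  shows "ln (exp 1 * real n / real k) \<le> 9 * real (LL n k)"
proof -
  have m1: "1 \<le> mm n k" by (rule mm_pos[OF k1 kn])
  have "n < k * (mm n k + 1)"
  proof -
    have e: "n div k * k + n mod k = n" by (rule div_mult_mod_eq)
    have "n mod k < k" using k1 by simp
    then have "n < n div k * k + k" using e by linarith
    then show ?thesis unfolding mm_def by (simp add: algebra_simps)
  qed
  then have "real n < real k * (real (mm n k) + 1)" by (metis of_nat_add of_nat_less_iff of_nat_mult of_nat_1)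
  then have y: "real n / real k < real (mm n k) + 1" using k1 by (simp add: field_simps)
  have ypos: "real n / real k > 0" using k1 kn by simp
  have "real n / real k \<le> 2 * real (mm n k)" using y m1 by linarith
  then have "ln (real n / real k) \<le> ln (2 * real (mm n k))" using ypos by simp
  also have "\<dots> = ln 2 + ln (real (mm n k))" using m1 by (simp add: ln_mult)
  finally have a0: "ln (real n / real k) \<le> ln 2 + ln (real (mm n k))" .
  have l128: "ln (128::real) = 7 * ln 2"
  proof -
    have "ln ((2::real) ^ 7) = real 7 * ln 2" by (rule ln_realpow)
    then show ?thesis by simp
  qed
  have "ln (real (mm n k)) < real (LL n k) * ln 128" by (rule q_bounds(2)[OF k1 kn])
  then have a: "ln (real n / real k) < ln 2 + real (LL n k) * (7 * ln 2)" using a0 l128 by simp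
  have l2: "ln (2::real) < 1" by (rule ln_2_less_1)
  have l20: "ln (2::real) > 0" by simp
  have L1: "real (LL n k) \<ge> 1" unfolding LL_def by simp
  have "real (LL n k) * (7 * ln 2) \<le> real (LL n k) * 7" using l2 L1 by (intro mult_left_mono) auto
  have "ln (exp 1 * real n / real k) = 1 + ln (real n / real k)"
  proof -
    have e: "exp 1 * real n / real k = exp 1 * (real n / real k)" by simp
    have "ln (exp 1 * (real n / real k)) = ln (exp 1) + ln (real n / real k)"
      by (rule ln_mult_pos) (use ypos in auto)
    then show ?thesis unfolding e by simp
  qed
  also have "\<dots> < 1 + ln 2 + real (LL n k) * (7 * ln 2)" using a by simp
  also have "\<dots> \<le> 9 * real (LL n k)"
    using \<open>real (LL n k) * (7 * ln 2) \<le> real (LL n k) * 7\<close> l2 L1 by linarith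
  finally show ?thesis by simp
qed

theorem mainTheorem2:
  shows "\<exists>c>0. \<forall>(\<sigma>::real) (n::nat) (k::nat). \<sigma> > 0 \<and> 1 \<le> k \<and> k \<le> n \<longrightarrow>
    (SUP \<theta>\<in>Theta_up n k. \<integral>\<^sup>+ x. ennreal (sqdist_n n (iso_est n x) \<theta>) \<partial>gauss_n n \<theta> \<sigma>)
      \<ge> ennreal (c * \<sigma>\<^sup>2 * real k * ln (exp 1 * real n / real k))"
proof (intro exI[of _ "1/45"] conjI allI impI)
  show "(0::real) < 1/45" by simp
  fix \<sigma> :: real and n k :: nat
  assume h: "\<sigma> > 0 \<and> 1 \<le> k \<and> k \<le> n"
  then have s: "\<sigma> > 0" and k1: "1 \<le> k" and kn: "k \<le> n" by auto
  have "1/45 * \<sigma>\<^sup>2 * real k * ln (exp 1 * real n / real k) = (\<sigma>\<^sup>2 * real k / 45) * ln (exp 1 * real n / real k)"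
    by simp
  also have "\<dots> \<le> (\<sigma>\<^sup>2 * real k / 45) * (9 * real (LL n k))"
    using log_arith[OF k1 kn] by (intro mult_left_mono) auto
  also have "\<dots> = \<sigma>\<^sup>2 * (real k * real (LL n k) / 5)" by simp
  finally have "ennreal (1/45 * \<sigma>\<^sup>2 * real k * ln (exp 1 * real n / real k)) \<le> ennreal (\<sigma>\<^sup>2 * (real k * real (LL n k) / 5))"
    by (rule ennreal_leI)
  also have "\<dots> \<le> (SUP \<theta>\<in>Theta_up n k. \<integral>\<^sup>+ x. ennreal (sqdist_n n (iso_est n x) \<theta>) \<partial>gauss_n n \<theta> \<sigma>)"
    by (rule main_bound[OF k1 kn s])
  finally show "(SUP \<theta>\<in>Theta_up n k. \<integral>\<^sup>+ x. ennreal (sqdist_n n (iso_est n x) \<theta>) \<partial>gauss_n n \<theta> \<sigma>)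
      \<ge> ennreal (1/45 * \<sigma>\<^sup>2 * real k * ln (exp 1 * real n / real k))" .
qed


end
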